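(* Assume all internal energies $I_v$ are equal and that binary reactions $v,w\to v',w'$ occur at rates depending only on the types (not on energies), so that the type counts $(n_1,\dots,n_V)$, $\sum_vn_v=M$, evolve as an autonomous Markov chain. Let $\rho_1,\dots,\rho_V$ be probability densities on $\mathbb{R}_+$ such that for every possible reaction $v,w\to v',w'$, $$\rho_{vw}(T):=\int_0^T\rho_v(x)\rho_w(T-x)\,dx=\int_0^T\rho_{v'}(x)\rho_{w'}(T-x)\,dx=\rho_{v'w'}(T)\quad\text{for all }T\ge0,$$ and assume that in each reaction $v,w\to v',w'$ of two molecules with total energy $T$ the new energies are drawn from the canonical kernel $P_{\rho_{v'}\rho_{w'}}(\cdot,\cdot|T)$. Let $p(n_1,\dots,n_V)$ be a stationary distribution of the type-count chain (e.g. the limit of $p_t(n_1,\dots,n_V)$ as $t\to\infty$, assumed to exist). Then the measure on $\mathcal{L}^M$ under which the type counts have law $p$ and, conditionally on them, the energies of all molecules are independent with a type-$v$ molecule having density $\rho_v$, is invariant.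
   Context: $\mathcal{L}^M$ is the Markov process of $M$ molecules each described by a type $v\in\{1,\dots,V\}$ and kinetic energy in $\mathbb{R}_+$; in a binary reaction the total kinetic energy of the two reacting molecules is conserved (internal energies being equal). For types $v',w'$ with independent random variables $\xi_{v'},\xi_{w'}$ of densities $\rho_{v'},\rho_{w'}$, the canonical kernel is the conditional law $P_{\rho_{v'}\rho_{w'}}(x,y|T)=P(\xi_{v'}=x,\xi_{w'}=y\,|\,\xi_{v'}+\xi_{w'}=T)$. *)

theory Defs
  imports "HOL-Probability.Probability"
begin

text \<open>A state of the labelled M-molecule system: molecule i (i < M) has a type and
  a kinetic energy.\<close>
type_synonym 'v state = "nat \<Rightarrow> 'v \<times> real"

definition state_space :: "nat \<Rightarrow> ('v state) measure" where
  "state_space M = PiM {..<M} (\<lambda>_. count_space UNIV \<Otimes>\<^sub>M lborel)"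

definition conv :: "('v \<Rightarrow> real \<Rightarrow> real) \<Rightarrow> 'v \<Rightarrow> 'v \<Rightarrow> real \<Rightarrow> ennreal" where
  "conv \<rho> v w T = (\<integral>\<^sup>+ x. ennreal (indicator {0..T} x * \<rho> v x * \<rho> w (T - x)) \<partial>lborel)"

text \<open>Canonical kernel: conditional law of (xi_v, xi_w) given xi_v + xi_w = T.
  Where the conditional density is undefined (conv = 0 or infinity, a null set of T)
  an arbitrary convention (point mass at (T/2, T/2)) is used.\<close>
definition canon_kernel :: "('v \<Rightarrow> real \<Rightarrow> real) \<Rightarrow> 'v \<Rightarrow> 'v \<Rightarrow> real \<Rightarrow> (real \<times> real) measure" where
  "canon_kernel \<rho> v w T =
     (if 0 < conv \<rho> v w T \<and> conv \<rho> v w T < \<infinity>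
      then distr (density lborel (\<lambda>x. ennreal (indicator {0..T} x * \<rho> v x * \<rho> w (T - x)) / conv \<rho> v w T))
                 (lborel \<Otimes>\<^sub>M lborel) (\<lambda>x. (x, T - x))
      else return (lborel \<Otimes>\<^sub>M lborel) (T / 2, T / 2))"

definition cnt :: "nat \<Rightarrow> (nat \<Rightarrow> 'v) \<Rightarrow> 'v \<Rightarrow> nat" where
  "cnt M \<tau> v = card {i. i < M \<and> \<tau> i = v}"

definition count_states :: "nat \<Rightarrow> ('v::finite \<Rightarrow> nat) set" where
  "count_states M = {n. (\<Sum>v\<in>UNIV. n v) = M}"

text \<open>Number of ordered pairs of distinct molecules with types (v,w).\<close>
definition npairs :: "('v \<Rightarrow> nat) \<Rightarrow> 'v \<Rightarrow> 'v \<Rightarrow> nat" where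
  "npairs n v w = (if v = w then n v * (n v - 1) else n v * n w)"

definition move :: "('v \<Rightarrow> nat) \<Rightarrow> 'v \<Rightarrow> 'v \<Rightarrow> 'v \<Rightarrow> 'v \<Rightarrow> ('v \<Rightarrow> nat)" where
  "move n v w v' w' =
     (let n1 = n(v := n v - 1); n2 = n1(w := n1 w - 1); n3 = n2(v' := n2 v' + 1)
      in n3(w' := n3 w' + 1))"

text \<open>Transition rates of the (autonomous) type-count chain; r v w v' w' is the rate at
  which an ordered pair of distinct molecules of types (v,w) reacts into types (v',w').\<close>
definition count_rate :: "('v::finite \<Rightarrow> 'v \<Rightarrow> 'v \<Rightarrow> 'v \<Rightarrow> real) \<Rightarrow> ('v \<Rightarrow> nat) \<Rightarrow> ('v \<Rightarrow> nat) \<Rightarrow> real" where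
  "count_rate r n n' =
     (\<Sum>v\<in>UNIV. \<Sum>w\<in>UNIV. \<Sum>v'\<in>UNIV. \<Sum>w'\<in>UNIV.
        if move n v w v' w' = n' then real (npairs n v w) * r v w v' w' else 0)"

definition stationary_counts :: "('v::finite \<Rightarrow> 'v \<Rightarrow> 'v \<Rightarrow> 'v \<Rightarrow> real) \<Rightarrow> nat \<Rightarrow> (('v \<Rightarrow> nat) \<Rightarrow> real) \<Rightarrow> bool" where
  "stationary_counts r M p \<longleftrightarrow>
     (\<forall>n. 0 \<le> p n) \<and> (\<forall>n. n \<notin> count_states M \<longrightarrow> p n = 0) \<and>
     (\<Sum>n\<in>count_states M. p n) = 1 \<and>
     (\<forall>n\<in>count_states M.
        (\<Sum>n'\<in>count_states M. p n' * count_rate r n' n) = p n * (\<Sum>n'\<in>count_states M. count_rate r n n'))"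

text \<open>The candidate measure: counts have law p, labelled types are uniform given the
  counts (exchangeable), and given the types the energies are independent with densities rho.\<close>
definition inv_measure :: "nat \<Rightarrow> ('v::finite \<Rightarrow> real \<Rightarrow> real) \<Rightarrow> (('v \<Rightarrow> nat) \<Rightarrow> real) \<Rightarrow> ('v state) measure" where
  "inv_measure M \<rho> p = density (state_space M)
     (\<lambda>c. ennreal (p (cnt M (\<lambda>i. fst (c i))) * (\<Prod>v\<in>UNIV. fact (cnt M (\<lambda>i. fst (c i)) v)) / fact M
                   * (\<Prod>i<M. \<rho> (fst (c i)) (snd (c i)))))"

definition out_rate :: "('v::finite \<Rightarrow> 'v \<Rightarrow> 'v \<Rightarrow> 'v \<Rightarrow> real) \<Rightarrow> nat \<Rightarrow> 'v state \<Rightarrow> real" where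
  "out_rate r M c = (\<Sum>i<M. \<Sum>j\<in>{..<M} - {i}. \<Sum>v'\<in>UNIV. \<Sum>w'\<in>UNIV. r (fst (c i)) (fst (c j)) v' w')"

definition jump_rate :: "('v::finite \<Rightarrow> 'v \<Rightarrow> 'v \<Rightarrow> 'v \<Rightarrow> real) \<Rightarrow> ('v \<Rightarrow> real \<Rightarrow> real) \<Rightarrow> nat
    \<Rightarrow> 'v state \<Rightarrow> 'v state set \<Rightarrow> ennreal" where
  "jump_rate r \<rho> M c A =
     (\<Sum>i<M. \<Sum>j\<in>{..<M} - {i}. \<Sum>v'\<in>UNIV. \<Sum>w'\<in>UNIV.
        ennreal (r (fst (c i)) (fst (c j)) v' w') *
        emeasure (canon_kernel \<rho> v' w' (snd (c i) + snd (c j)))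
          {xy \<in> space (lborel \<Otimes>\<^sub>M lborel). c(i := (v', fst xy), j := (w', snd xy)) \<in> A})"

text \<open>Invariance of a measure for the bounded-rate jump process (global balance mu Q = 0).\<close>
definition invariant :: "('v::finite \<Rightarrow> 'v \<Rightarrow> 'v \<Rightarrow> 'v \<Rightarrow> real) \<Rightarrow> ('v \<Rightarrow> real \<Rightarrow> real) \<Rightarrow> nat
    \<Rightarrow> ('v state) measure \<Rightarrow> bool" where
  "invariant r \<rho> M \<mu> \<longleftrightarrow> sets \<mu> = sets (state_space M) \<and>
     (\<forall>A\<in>sets (state_space M).
        (\<integral>\<^sup>+ c. jump_rate r \<rho> M c A \<partial>\<mu>) = (\<integral>\<^sup>+ c. ennreal (out_rate r M c) * indicator A c \<partial>\<mu>))"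

end

theory Submission
  imports Defs
begin


lemma cnt_upd:
  assumes "i < M"
  shows "int (cnt M (t(i:=v)) u) = int (cnt M t u) - of_bool (t i = u) + of_bool (v = u)"
proof -
  let ?S = "{k. k < M \<and> k \<noteq> i \<and> t k = u}"
  have f: "finite ?S" by simp
  have i: "i \<notin> ?S" by simp
  have A: "{k. k < M \<and> t k = u} = ?S \<union> (if t i = u then {i} else {})" using assms by auto
  have B: "{k. k < M \<and> (t(i:=v)) k = u} = ?S \<union> (if v = u then {i} else {})" using assms by auto
  have "cnt M t u = card ?S + of_bool (t i = u)"
    unfolding cnt_def A using f i by (auto simp: card_insert_if)
  moreover have "cnt M (t(i:=v)) u = card ?S + of_bool (v = u)"
    unfolding cnt_def B using f i by (auto simp: card_insert_if)
  ultimately show ?thesis by simp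
qed

lemma cnt_Suc: "cnt (Suc M) t u = cnt M t u + of_bool (t M = u)"
proof -
  have "{k. k < Suc M \<and> t k = u} = {k. k < M \<and> t k = u} \<union> (if t M = u then {M} else {})"
    by (auto simp: less_Suc_eq)
  then show ?thesis unfolding cnt_def by (auto simp: card_insert_if)
qed

lemma cnt_sum: "(\<Sum>u\<in>(UNIV::'v::finite set). cnt M t u) = M"
proof (induction M)
  case 0 then show ?case by (simp add: cnt_def)
next
  case (Suc M)
  have "(\<Sum>u\<in>(UNIV::'v set). cnt (Suc M) t u) = (\<Sum>u\<in>UNIV. cnt M t u) + (\<Sum>u\<in>(UNIV::'v set). of_bool (t M = u))"
    by (simp add: cnt_Suc sum.distrib)
  also have "(\<Sum>u\<in>(UNIV::'v set). (of_bool (t M = u)::nat)) = 1"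
    by (simp add: sum.delta)
  finally show ?case using Suc by simp
qed

lemma cnt_in: "cnt M t \<in> count_states M"
  by (simp add: count_states_def cnt_sum)

lemma npairs_pos: "0 < npairs n v w \<longleftrightarrow> (if v = w then 2 \<le> n v else 1 \<le> n v \<and> 1 \<le> n w)"
  by (auto simp: npairs_def)

lemma move_int:
  assumes "0 < npairs m v w"
  shows "int (move m v w a b u) = int (m u) - of_bool (v = u) - of_bool (w = u) + of_bool (a = u) + of_bool (b = u)"
  using assms unfolding npairs_pos move_def Let_def
  by (cases "v = w") (auto split: if_splits)

lemma cnt_upd2:
  assumes "i < M" "j < M" "i \<noteq> j"
  shows "cnt M (t(i:=v, j:=w)) = move (cnt M t) (t i) (t j) v w"
proof
  fix u
  have pos: "0 < npairs (cnt M t) (t i) (t j)"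
  proof -
    have "{i, j} \<subseteq> {k. k < M \<and> t k = t i}" if "t i = t j" using assms that by auto
    then have "t i = t j \<Longrightarrow> 2 \<le> cnt M t (t i)" unfolding cnt_def using assms
      by (metis (no_types, lifting) card_2_iff card_mono finite_nat_set_iff_bounded mem_Collect_eq)
    moreover have "i \<in> {k. k < M \<and> t k = t i}" "j \<in> {k. k < M \<and> t k = t j}" using assms by auto
    then have "1 \<le> cnt M t (t i)" "1 \<le> cnt M t (t j)" unfolding cnt_def
      by (metis (no_types, lifting) One_nat_def Suc_leI card_gt_0_iff empty_iff finite_nat_set_iff_bounded mem_Collect_eq)+
    ultimately show ?thesis unfolding npairs_pos by auto
  qed
  have "int (cnt M (t(i:=v, j:=w)) u) = int (cnt M (t(i:=v)) u) - of_bool ((t(i:=v)) j = u) + of_bool (w = u)"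
    using cnt_upd[OF assms(2), of "t(i:=v)" w u] by simp
  also have "\<dots> = int (move (cnt M t) (t i) (t j) v w u)"
    using cnt_upd[OF assms(1), of t v u] assms(3) move_int[OF pos] by simp
  finally show "cnt M (t(i:=v, j:=w)) u = move (cnt M t) (t i) (t j) v w u" by simp
qed

lemma card_pairs:
  "card {x \<in> Sigma {..<M} (\<lambda>i. {..<M} - {i}). t (fst x) = a \<and> t (snd x) = b} = npairs (cnt M t) a b"
proof -
  let ?A = "{k. k < M \<and> t k = a}" and ?B = "{k. k < M \<and> t k = b}"
  show ?thesis
  proof (cases "a = b")
    case True
    have eq: "{x \<in> Sigma {..<M} (\<lambda>i. {..<M} - {i}). t (fst x) = a \<and> t (snd x) = b}
       = ?A \<times> ?A - (\<lambda>k. (k,k)) ` ?A" using True by auto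
    have "card ((\<lambda>k. (k,k)) ` ?A) = card ?A" by (rule card_image) (auto simp: inj_on_def)
    then have "card (?A \<times> ?A - (\<lambda>k. (k,k)) ` ?A) = card ?A * card ?A - card ?A"
      by (subst card_Diff_subset) (auto simp: card_cartesian_product)
    then show ?thesis unfolding eq using True by (simp add: npairs_def cnt_def diff_mult_distrib2)
  next
    case False
    have eq: "{x \<in> Sigma {..<M} (\<lambda>i. {..<M} - {i}). t (fst x) = a \<and> t (snd x) = b}
       = ?A \<times> ?B" using False by auto
    show ?thesis unfolding eq using False by (simp add: npairs_def cnt_def card_cartesian_product)
  qed
qed

lemma pairs_sum:
  fixes h :: "'v::finite \<Rightarrow> 'v \<Rightarrow> real"
  shows "(\<Sum>i<M. \<Sum>j\<in>{..<M}-{i}. h (t i) (t j)) = (\<Sum>a\<in>UNIV. \<Sum>b\<in>UNIV. real (npairs (cnt M t) a b) * h a b)"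
proof -
  let ?D = "Sigma {..<M} (\<lambda>i. {..<M} - {i})"
  let ?g = "\<lambda>x. (t (fst x), t (snd x))"
  have "(\<Sum>i<M. \<Sum>j\<in>{..<M}-{i}. h (t i) (t j)) = (\<Sum>x\<in>?D. h (t (fst x)) (t (snd x)))"
    by (subst sum.Sigma) (auto simp: case_prod_beta)
  also have "\<dots> = (\<Sum>y\<in>UNIV. \<Sum>x\<in>{x. x \<in> ?D \<and> ?g x = y}. h (t (fst x)) (t (snd x)))"
    by (rule sum.group[symmetric]) auto
  also have "\<dots> = (\<Sum>y\<in>UNIV. real (npairs (cnt M t) (fst y) (snd y)) * h (fst y) (snd y))"
  proof (rule sum.cong[OF refl])
    fix y :: "'v \<times> 'v"
    obtain a b where y: "y = (a,b)" by (cases y)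
    have "(\<Sum>x\<in>{x. x \<in> ?D \<and> ?g x = y}. h (t (fst x)) (t (snd x))) = (\<Sum>x\<in>{x. x \<in> ?D \<and> ?g x = y}. h a b)"
      by (rule sum.cong) (auto simp: y)
    also have "\<dots> = real (card {x \<in> ?D. t (fst x) = a \<and> t (snd x) = b}) * h a b"
      by (simp add: y)
    finally show "(\<Sum>x\<in>{x. x \<in> ?D \<and> ?g x = y}. h (t (fst x)) (t (snd x))) = real (npairs (cnt M t) (fst y) (snd y)) * h (fst y) (snd y)"
      using card_pairs[of M t a b] by (simp add: y)
  qed
  also have "\<dots> = (\<Sum>a\<in>UNIV. \<Sum>b\<in>UNIV. real (npairs (cnt M t) a b) * h a b)"
    by (subst sum.cartesian_product) (simp add: UNIV_Times_UNIV[symmetric] case_prod_beta del: UNIV_Times_UNIV)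
  finally show ?thesis .
qed

lemma finite_count_states: "finite (count_states M :: ('v::finite \<Rightarrow> nat) set)"
proof -
  have "count_states M \<subseteq> {f::'v\<Rightarrow>nat. \<forall>x. (x \<in> UNIV \<longrightarrow> f x \<in> {..M}) \<and> (x \<notin> UNIV \<longrightarrow> f x = 0)}"
  proof (rule subsetI)
    fix f :: "'v \<Rightarrow> nat" assume "f \<in> count_states M"
    then have "(\<Sum>v\<in>UNIV. f v) = M" by (simp add: count_states_def)
    moreover have "\<And>x. f x \<le> (\<Sum>v\<in>UNIV. f v)" by (rule member_le_sum) auto
    ultimately show "f \<in> {f::'v\<Rightarrow>nat. \<forall>x. (x \<in> UNIV \<longrightarrow> f x \<in> {..M}) \<and> (x \<notin> UNIV \<longrightarrow> f x = 0)}" by simp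
  qed
  moreover have "finite {f::'v\<Rightarrow>nat. \<forall>x. (x \<in> UNIV \<longrightarrow> f x \<in> {..M}) \<and> (x \<notin> UNIV \<longrightarrow> f x = 0)}"
    by (rule finite_set_of_finite_funs) auto
  ultimately show ?thesis by (rule finite_subset)
qed

definition Wf :: "('v::finite \<Rightarrow> nat) \<Rightarrow> real" where
  "Wf m = (\<Prod>u\<in>UNIV. fact (m u))"

definition sub2 :: "('v \<Rightarrow> nat) \<Rightarrow> 'v \<Rightarrow> 'v \<Rightarrow> ('v \<Rightarrow> nat)" where
  "sub2 m v w = (\<lambda>u. m u - of_bool (v = u) - of_bool (w = u))"

lemma W_sub2:
  fixes m :: "'v::finite \<Rightarrow> nat"
  assumes pos: "0 < npairs m v w"
  shows "Wf m = real (npairs m v w) * Wf (sub2 m v w)"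
proof (cases "v = w")
  case True
  then have ge: "2 \<le> m v" using pos by (simp add: npairs_pos)
  then obtain k where k: "m v = Suc (Suc k)" by (metis add_2_eq_Suc le_Suc_ex)
  have "Wf m = fact (m v) * (\<Prod>u\<in>UNIV-{v}. fact (m u))"
    unfolding Wf_def by (subst prod.remove[of _ v]) auto
  moreover have "Wf (sub2 m v w) = fact (m v - 2) * (\<Prod>u\<in>UNIV-{v}. fact (m u))"
    unfolding Wf_def sub2_def using True by (subst prod.remove[of _ v]) (auto intro!: prod.cong simp: numeral_2_eq_2)
  moreover have "(fact (m v) :: real) = real (m v * (m v - 1)) * fact (m v - 2)"
    using k by (simp add: algebra_simps)
  ultimately show ?thesis using True by (simp add: npairs_def)
next
  case False
  then have ge: "1 \<le> m v" "1 \<le> m w" using pos by (auto simp: npairs_pos)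
  have split: "(\<Prod>u\<in>UNIV. g u) = g v * (g w * (\<Prod>u\<in>UNIV-{v}-{w}. g u))" for g :: "'v \<Rightarrow> real"
  proof -
    have "(\<Prod>u\<in>UNIV. g u) = g v * (\<Prod>u\<in>UNIV-{v}. g u)" by (rule prod.remove) auto
    moreover have "(\<Prod>u\<in>UNIV-{v}. g u) = g w * (\<Prod>u\<in>UNIV-{v}-{w}. g u)"
      by (rule prod.remove) (use False in auto)
    ultimately show ?thesis by simp
  qed
  have "Wf m = fact (m v) * (fact (m w) * (\<Prod>u\<in>UNIV-{v}-{w}. fact (m u)))"
    unfolding Wf_def by (rule split)
  moreover have "Wf (sub2 m v w) = fact (m v - 1) * (fact (m w - 1) * (\<Prod>u\<in>UNIV-{v}-{w}. fact (m u)))"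
  proof -
    have "(\<Prod>u\<in>UNIV-{v}-{w}. fact (sub2 m v w u)) = (\<Prod>u\<in>UNIV-{v}-{w}. (fact (m u)::real))"
      by (rule prod.cong) (auto simp: sub2_def)
    then show ?thesis unfolding Wf_def using False by (subst split) (simp add: sub2_def)
  qed
  moreover have "(fact (m v) :: real) = real (m v) * fact (m v - 1)" "(fact (m w) :: real) = real (m w) * fact (m w - 1)"
    using ge by (metis One_nat_def Suc_le_D diff_Suc_1 fact_Suc of_nat_Suc mult.commute)+
  ultimately show ?thesis using False by (simp add: npairs_def)
qed

lemma move_pos:
  assumes "0 < npairs m v w" shows "0 < npairs (move m v w a b) a b"
proof -
  have h: "\<And>u. int (move m v w a b u) = int (m u) - of_bool (v = u) - of_bool (w = u) + of_bool (a = u) + of_bool (b = u)"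
    by (rule move_int[OF assms])
  have m: "if v = w then 2 \<le> m v else 1 \<le> m v \<and> 1 \<le> m w" using assms by (simp add: npairs_pos)
  have "int (m u) - of_bool (v = u) - of_bool (w = u) \<ge> 0" for u
    using m by (cases "v = w") auto
  then have A: "int (move m v w a b a) \<ge> 1 + of_bool (b = a)" and B: "int (move m v w a b b) \<ge> 1"
    using h[of a] h[of b] by force+
  show ?thesis
  proof (cases "a = b")
    case True then show ?thesis using A by (simp add: npairs_pos)
  next
    case False then show ?thesis using A B by (simp add: npairs_pos)
  qed
qed

lemma move_move:
  assumes "0 < npairs m v w" shows "move (move m v w a b) a b v w = m"
proof
  fix u
  have "int (move (move m v w a b) a b v w u) = int (m u)"
    using move_int[OF move_pos[OF assms, of a b], of v w u] move_int[OF assms, of a b u] by simp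
  then show "move (move m v w a b) a b v w u = m u" by simp
qed

lemma sub2_move:
  assumes "0 < npairs m v w" shows "sub2 (move m v w a b) a b = sub2 m v w"
proof
  fix u
  have m: "if v = w then 2 \<le> m v else 1 \<le> m v \<and> 1 \<le> m w" using assms by (simp add: npairs_pos)
  have "int (m u) - of_bool (v = u) - of_bool (w = u) \<ge> 0"
    using m by (cases "v = w") auto
  moreover have "int (move m v w a b u) - of_bool (a = u) - of_bool (b = u) \<ge> 0"
    using move_int[OF assms, of a b u] \<open>int (m u) - of_bool (v = u) - of_bool (w = u) \<ge> 0\<close> by simp
  ultimately show "sub2 (move m v w a b) a b u = sub2 m v w u"
    unfolding sub2_def using move_int[OF assms, of a b u]
    by (cases "a = u"; cases "b = u"; cases "v = u"; cases "w = u") auto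
qed

lemma move_sum:
  fixes m :: "'v::finite \<Rightarrow> nat"
  assumes "0 < npairs m v w" shows "(\<Sum>u\<in>UNIV. move m v w a b u) = (\<Sum>u\<in>UNIV. m u)"
proof -
  have "int (\<Sum>u\<in>UNIV. move m v w a b u) = (\<Sum>u\<in>UNIV. int (move m v w a b u))" by simp
  also have "\<dots> = (\<Sum>u\<in>UNIV. int (m u) - of_bool (v = u) - of_bool (w = u) + of_bool (a = u) + of_bool (b = u))"
    using move_int[OF assms] by simp
  also have "\<dots> = (\<Sum>u\<in>UNIV. int (m u))"
    by (simp add: sum.distrib sum_subtractf sum.delta)
  also have "\<dots> = int (\<Sum>u\<in>UNIV. m u)" by simp
  finally show ?thesis by (simp only: of_nat_eq_iff)
qed

lemma star:
  fixes p :: "('v::finite \<Rightarrow> nat) \<Rightarrow> real" and v w a b :: 'v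
  assumes nC: "n \<in> count_states M"
  shows "(\<Sum>m\<in>count_states M. if move m v w a b = n then real (npairs m v w) * p m else 0) * Wf n
      = real (npairs n a b) * p (move n a b v w) * Wf (move n a b v w)"
proof (cases "0 < npairs n a b")
  case True
  define m0 where "m0 = move n a b v w"
  have pos0: "0 < npairs m0 v w" unfolding m0_def by (rule move_pos[OF True])
  have bk: "move m0 v w a b = n" unfolding m0_def by (rule move_move[OF True])
  have m0C: "m0 \<in> count_states M"
    using move_sum[OF True, of v w] nC unfolding m0_def count_states_def by simp
  have "(\<Sum>m\<in>count_states M. if move m v w a b = n then real (npairs m v w) * p m else 0)
     = (\<Sum>m\<in>count_states M. if m = m0 then real (npairs m0 v w) * p m0 else 0)"
  proof (rule sum.cong[OF refl])
    fix m :: "'v \<Rightarrow> nat" assume "m \<in> count_states M"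
    show "(if move m v w a b = n then real (npairs m v w) * p m else 0) = (if m = m0 then real (npairs m0 v w) * p m0 else 0)"
    proof (cases "0 < npairs m v w")
      case True
      then have "move m v w a b = n \<longleftrightarrow> m = m0"
        using move_move[OF True, of a b] bk unfolding m0_def by metis
      then show ?thesis by auto
    next
      case False
      then have "m \<noteq> m0" using pos0 by auto
      then show ?thesis using False by auto
    qed
  qed
  also have "\<dots> = real (npairs m0 v w) * p m0"
    using m0C by (simp add: sum.delta[OF finite_count_states])
  finally have S: "(\<Sum>m\<in>count_states M. if move m v w a b = n then real (npairs m v w) * p m else 0)
    = real (npairs m0 v w) * p m0" .
  have "Wf n = real (npairs n a b) * Wf (sub2 n a b)" by (rule W_sub2[OF True])
  moreover have "Wf m0 = real (npairs m0 v w) * Wf (sub2 m0 v w)" by (rule W_sub2[OF pos0])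
  moreover have "sub2 m0 v w = sub2 n a b" unfolding m0_def by (rule sub2_move[OF True])
  ultimately show ?thesis using S by (simp add: m0_def)
next
  case False
  have "(\<Sum>m\<in>count_states M. if move m v w a b = n then real (npairs m v w) * p m else 0) = 0"
  proof (rule sum.neutral, rule ballI)
    fix m :: "'v \<Rightarrow> nat" assume "m \<in> count_states M"
    show "(if move m v w a b = n then real (npairs m v w) * p m else 0) = 0"
      using move_pos[of m v w a b] False by (cases "0 < npairs m v w") auto
  qed
  then show ?thesis using False by simp
qed

lemma swap4: fixes f :: "'a::finite \<Rightarrow> 'a \<Rightarrow> 'a \<Rightarrow> 'a \<Rightarrow> real"
  shows "(\<Sum>a\<in>UNIV. \<Sum>b\<in>UNIV. \<Sum>v\<in>UNIV. \<Sum>w\<in>UNIV. f a b v w) = (\<Sum>v\<in>UNIV. \<Sum>w\<in>UNIV. \<Sum>a\<in>UNIV. \<Sum>b\<in>UNIV. f a b v w)"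
proof -
  have "(\<Sum>a\<in>UNIV. \<Sum>b\<in>UNIV. \<Sum>v\<in>UNIV. \<Sum>w\<in>UNIV. f a b v w) = (\<Sum>a\<in>UNIV. \<Sum>v\<in>UNIV. \<Sum>b\<in>UNIV. \<Sum>w\<in>UNIV. f a b v w)"
    by (rule sum.cong[OF refl], rule sum.swap)
  also have "\<dots> = (\<Sum>v\<in>UNIV. \<Sum>a\<in>UNIV. \<Sum>b\<in>UNIV. \<Sum>w\<in>UNIV. f a b v w)"
    by (rule sum.swap)
  also have "\<dots> = (\<Sum>v\<in>UNIV. \<Sum>a\<in>UNIV. \<Sum>w\<in>UNIV. \<Sum>b\<in>UNIV. f a b v w)"
    by (rule sum.cong[OF refl], rule sum.cong[OF refl], rule sum.swap)
  also have "\<dots> = (\<Sum>v\<in>UNIV. \<Sum>w\<in>UNIV. \<Sum>a\<in>UNIV. \<Sum>b\<in>UNIV. f a b v w)"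
    by (rule sum.cong[OF refl], rule sum.swap)
  finally show ?thesis .
qed

lemma swapA: fixes f :: "'b \<Rightarrow> 'a::finite \<Rightarrow> 'a \<Rightarrow> 'a \<Rightarrow> 'a \<Rightarrow> real"
  shows "(\<Sum>m\<in>A. \<Sum>v\<in>UNIV. \<Sum>w\<in>UNIV. \<Sum>a\<in>UNIV. \<Sum>b\<in>UNIV. f m v w a b) = (\<Sum>v\<in>UNIV. \<Sum>w\<in>UNIV. \<Sum>a\<in>UNIV. \<Sum>b\<in>UNIV. \<Sum>m\<in>A. f m v w a b)"
  by (simp add: sum.swap[of _ A])

definition q_of :: "(('v::finite \<Rightarrow> nat) \<Rightarrow> real) \<Rightarrow> nat \<Rightarrow> (nat \<Rightarrow> 'v) \<Rightarrow> real" where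
  "q_of p M t = p (cnt M t) * (\<Prod>v\<in>UNIV. fact (cnt M t v)) / fact M"

definition In_r :: "('v::finite \<Rightarrow> 'v \<Rightarrow> 'v \<Rightarrow> 'v \<Rightarrow> real) \<Rightarrow> (('v \<Rightarrow> nat) \<Rightarrow> real) \<Rightarrow> nat \<Rightarrow> (nat \<Rightarrow> 'v) \<Rightarrow> real" where
  "In_r r p M t = (\<Sum>i<M. \<Sum>j\<in>{..<M}-{i}. \<Sum>v\<in>UNIV. \<Sum>w\<in>UNIV. q_of p M (t(i:=v, j:=w)) * r v w (t i) (t j))"

definition Out_r :: "('v::finite \<Rightarrow> 'v \<Rightarrow> 'v \<Rightarrow> 'v \<Rightarrow> real) \<Rightarrow> nat \<Rightarrow> (nat \<Rightarrow> 'v) \<Rightarrow> real" where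
  "Out_r r M t = (\<Sum>i<M. \<Sum>j\<in>{..<M}-{i}. \<Sum>v'\<in>UNIV. \<Sum>w'\<in>UNIV. r (t i) (t j) v' w')"

lemma out_sum:
  fixes n :: "'v::finite \<Rightarrow> nat"
  assumes nC: "n \<in> count_states M"
  shows "(\<Sum>m\<in>count_states M. count_rate r n m) = (\<Sum>v\<in>UNIV. \<Sum>w\<in>UNIV. real (npairs n v w) * (\<Sum>a\<in>UNIV. \<Sum>b\<in>UNIV. r v w a b))"
proof -
  have "(\<Sum>m\<in>count_states M. count_rate r n m) = (\<Sum>v\<in>UNIV. \<Sum>w\<in>UNIV. \<Sum>a\<in>UNIV. \<Sum>b\<in>UNIV. \<Sum>m\<in>count_states M.
      if move n v w a b = m then real (npairs n v w) * r v w a b else 0)"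
    unfolding count_rate_def by (rule swapA)
  also have "\<dots> = (\<Sum>v\<in>UNIV. \<Sum>w\<in>UNIV. \<Sum>a\<in>UNIV. \<Sum>b\<in>UNIV. real (npairs n v w) * r v w a b)"
  proof (intro sum.cong refl)
    fix v w a b
    show "(\<Sum>m\<in>count_states M. if move n v w a b = m then real (npairs n v w) * r v w a b else 0) = real (npairs n v w) * r v w a b"
    proof (cases "0 < npairs n v w")
      case True
      then have "move n v w a b \<in> count_states M" using move_sum[OF True, of a b] nC by (simp add: count_states_def)
      then show ?thesis by (simp add: sum.delta'[OF finite_count_states])
    next
      case False then show ?thesis by (simp add: sum.neutral)
    qed
  qed
  also have "\<dots> = (\<Sum>v\<in>UNIV. \<Sum>w\<in>UNIV. real (npairs n v w) * (\<Sum>a\<in>UNIV. \<Sum>b\<in>UNIV. r v w a b))"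
    by (simp add: sum_distrib_left)
  finally show ?thesis .
qed

lemma balance:
  fixes r :: "'v::finite \<Rightarrow> 'v \<Rightarrow> 'v \<Rightarrow> 'v \<Rightarrow> real"
  assumes stat: "stationary_counts r M p"
  shows "In_r r p M t = q_of p M t * Out_r r M t"
proof -
  define n where "n = cnt M t"
  have nC: "n \<in> count_states M" unfolding n_def by (rule cnt_in)
  define H where "H a b = (\<Sum>v\<in>UNIV. \<Sum>w\<in>UNIV. p (move n a b v w) * Wf (move n a b v w) / fact M * r v w a b)" for a b
  define R where "R a b = (\<Sum>v'\<in>UNIV. \<Sum>w'\<in>UNIV. r a b v' w')" for a b
  have "In_r r p M t = (\<Sum>i<M. \<Sum>j\<in>{..<M}-{i}. H (t i) (t j))"
    unfolding In_r_def H_def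
  proof (intro sum.cong refl)
    fix i j v w assume "i \<in> {..<M}" "j \<in> {..<M} - {i}"
    then show "q_of p M (t(i := v, j := w)) * r v w (t i) (t j) = p (move n (t i) (t j) v w) * Wf (move n (t i) (t j) v w) / fact M * r v w (t i) (t j)"
      using cnt_upd2[of i M j t v w] by (simp add: q_of_def Wf_def n_def)
  qed
  also have "\<dots> = (\<Sum>a\<in>UNIV. \<Sum>b\<in>UNIV. real (npairs n a b) * H a b)"
    unfolding n_def by (rule pairs_sum)
  finally have In: "In_r r p M t = (\<Sum>a\<in>UNIV. \<Sum>b\<in>UNIV. real (npairs n a b) * H a b)" .
  have Out: "Out_r r M t = (\<Sum>a\<in>UNIV. \<Sum>b\<in>UNIV. real (npairs n a b) * R a b)"
    unfolding Out_r_def R_def n_def by (rule pairs_sum)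
  have "(\<Sum>a\<in>UNIV. \<Sum>b\<in>UNIV. real (npairs n a b) * H a b) * fact M
     = (\<Sum>a\<in>UNIV. \<Sum>b\<in>UNIV. \<Sum>v\<in>UNIV. \<Sum>w\<in>UNIV. r v w a b * (real (npairs n a b) * p (move n a b v w) * Wf (move n a b v w)))"
    unfolding H_def by (simp add: sum_distrib_left sum_distrib_right field_simps)
  also have "\<dots> = (\<Sum>a\<in>UNIV. \<Sum>b\<in>UNIV. \<Sum>v\<in>UNIV. \<Sum>w\<in>UNIV. r v w a b *
       ((\<Sum>m\<in>count_states M. if move m v w a b = n then real (npairs m v w) * p m else 0) * Wf n))"
    using star[OF nC] by simp
  also have "\<dots> = (\<Sum>v\<in>UNIV. \<Sum>w\<in>UNIV. \<Sum>a\<in>UNIV. \<Sum>b\<in>UNIV. r v w a b *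
       ((\<Sum>m\<in>count_states M. if move m v w a b = n then real (npairs m v w) * p m else 0) * Wf n))"
    by (rule swap4)
  also have "\<dots> = Wf n * (\<Sum>v\<in>UNIV. \<Sum>w\<in>UNIV. \<Sum>a\<in>UNIV. \<Sum>b\<in>UNIV. \<Sum>m\<in>count_states M.
        p m * (if move m v w a b = n then real (npairs m v w) * r v w a b else 0))"
    by (simp add: sum_distrib_left sum_distrib_right mult_ac if_distrib cong: if_cong)
  also have "\<dots> = Wf n * (\<Sum>m\<in>count_states M. p m * count_rate r m n)"
    unfolding count_rate_def by (simp add: sum_distrib_left swapA)
  also have "\<dots> = Wf n * (p n * (\<Sum>m\<in>count_states M. count_rate r n m))"
    using stat nC unfolding stationary_counts_def by (simp add: mult_ac)
  also have "\<dots> = Wf n * p n * (\<Sum>a\<in>UNIV. \<Sum>b\<in>UNIV. real (npairs n a b) * R a b)"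
    unfolding out_sum[OF nC] R_def by simp
  finally have "(\<Sum>a\<in>UNIV. \<Sum>b\<in>UNIV. real (npairs n a b) * H a b) * fact M = Wf n * p n * (\<Sum>a\<in>UNIV. \<Sum>b\<in>UNIV. real (npairs n a b) * R a b)" .
  then show ?thesis unfolding In Out q_of_def Wf_def n_def
    by (simp add: field_simps)
qed




locale dens =
  fixes \<rho> :: "'v \<Rightarrow> real \<Rightarrow> real"
  assumes dens_meas: "\<And>v. \<rho> v \<in> borel_measurable lborel"
    and dens_nonneg: "\<And>v x. 0 \<le> \<rho> v x"
    and dens_supp: "\<And>v x. x < 0 \<Longrightarrow> \<rho> v x = 0"
    and dens_prob: "\<And>v. (\<integral>\<^sup>+ x. ennreal (\<rho> v x) \<partial>lborel) = 1"
begin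

lemma rho_borel[measurable]: "\<rho> v \<in> borel_measurable borel"
  using dens_meas[of v] by simp

lemma ind_rho: "indicator {0..T} x * \<rho> v x * \<rho> w (T - x) = \<rho> v x * \<rho> w (T - x)"
  by (cases "0 \<le> x"; cases "x \<le> T") (auto simp: dens_supp)

lemma conv_alt: "conv \<rho> v w T = (\<integral>\<^sup>+ x. ennreal (\<rho> v x * \<rho> w (T - x)) \<partial>lborel)"
  unfolding conv_def ind_rho ..

lemma conv_neg: "T < 0 \<Longrightarrow> conv \<rho> v w T = 0"
  unfolding conv_def by simp

lemma conv_meas[measurable]: "(\<lambda>T. conv \<rho> v w T) \<in> borel_measurable borel"
  unfolding conv_alt by measurable

lemma conv_int:
  assumes [measurable]: "\<Psi> \<in> borel_measurable borel"
  shows "(\<integral>\<^sup>+ eb. \<integral>\<^sup>+ ea. ennreal (\<rho> v ea * \<rho> w eb) * \<Psi> (ea + eb) \<partial>lborel \<partial>lborel)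
       = (\<integral>\<^sup>+ T. conv \<rho> v w T * \<Psi> T \<partial>lborel)"
proof -
  have "(\<integral>\<^sup>+ eb. \<integral>\<^sup>+ ea. ennreal (\<rho> v ea * \<rho> w eb) * \<Psi> (ea + eb) \<partial>lborel \<partial>lborel)
      = (\<integral>\<^sup>+ ea. \<integral>\<^sup>+ eb. ennreal (\<rho> v ea * \<rho> w eb) * \<Psi> (ea + eb) \<partial>lborel \<partial>lborel)"
    by (rule lborel_pair.Fubini') measurable
  also have "\<dots> = (\<integral>\<^sup>+ ea. \<integral>\<^sup>+ T. ennreal (\<rho> v ea * \<rho> w (T - ea)) * \<Psi> T \<partial>lborel \<partial>lborel)"
  proof (rule nn_integral_cong)
    fix ea
    have "(\<lambda>T. ennreal (\<rho> v ea * \<rho> w (T - ea)) * \<Psi> T) \<in> borel_measurable borel" by measurable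
    from nn_integral_real_affine[OF this, of 1 ea]
    have "(\<integral>\<^sup>+ T. ennreal (\<rho> v ea * \<rho> w (T - ea)) * \<Psi> T \<partial>lborel)
        = (\<integral>\<^sup>+ x. ennreal (\<rho> v ea * \<rho> w x) * \<Psi> (ea + x) \<partial>lborel)" by simp
    then show "(\<integral>\<^sup>+ eb. ennreal (\<rho> v ea * \<rho> w eb) * \<Psi> (ea + eb) \<partial>lborel)
        = (\<integral>\<^sup>+ T. ennreal (\<rho> v ea * \<rho> w (T - ea)) * \<Psi> T \<partial>lborel)" by simp
  qed
  also have "\<dots> = (\<integral>\<^sup>+ T. \<integral>\<^sup>+ ea. ennreal (\<rho> v ea * \<rho> w (T - ea)) * \<Psi> T \<partial>lborel \<partial>lborel)"
    by (rule lborel_pair.Fubini'[symmetric]) measurable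
  also have "\<dots> = (\<integral>\<^sup>+ T. conv \<rho> v w T * \<Psi> T \<partial>lborel)"
    by (rule nn_integral_cong) (simp add: conv_alt nn_integral_multc)
  finally show ?thesis .
qed

lemma conv_total: "(\<integral>\<^sup>+ T. conv \<rho> v w T \<partial>lborel) = 1"
proof -
  have "(\<integral>\<^sup>+ T. conv \<rho> v w T \<partial>lborel) = (\<integral>\<^sup>+ T. conv \<rho> v w T * 1 \<partial>lborel)" by simp
  also have "\<dots> = (\<integral>\<^sup>+ eb. \<integral>\<^sup>+ ea. ennreal (\<rho> v ea * \<rho> w eb) * 1 \<partial>lborel \<partial>lborel)"
    by (rule conv_int[symmetric]) simp
  also have "\<dots> = (\<integral>\<^sup>+ eb. ennreal (\<rho> w eb) \<partial>lborel)"
    by (rule nn_integral_cong)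
       (simp add: ennreal_mult dens_nonneg nn_integral_multc dens_prob)
  also have "\<dots> = 1" by (rule dens_prob)
  finally show ?thesis .
qed


lemma K_emeasure:
  assumes B[measurable]: "B \<in> sets (lborel \<Otimes>\<^sub>M lborel)"
  shows "emeasure (canon_kernel \<rho> v w T) B =
    (if 0 < conv \<rho> v w T \<and> conv \<rho> v w T < \<infinity>
     then (\<integral>\<^sup>+ x. ennreal (\<rho> v x * \<rho> w (T - x)) * indicator B (x, T - x) \<partial>lborel) / conv \<rho> v w T
     else indicator B (T / 2, T / 2))"
proof (cases "0 < conv \<rho> v w T \<and> conv \<rho> v w T < \<infinity>")
  case True
  let ?h = "\<lambda>x. ennreal (indicator {0..T} x * \<rho> v x * \<rho> w (T - x)) / conv \<rho> v w T"
  have hm[measurable]: "?h \<in> borel_measurable lborel" by measurable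
  have phi: "(\<lambda>x. (x, T - x)) \<in> measurable (density lborel ?h) (lborel \<Otimes>\<^sub>M lborel)"
    by (subst measurable_cong_sets[OF sets_density refl]) measurable
  have "emeasure (canon_kernel \<rho> v w T) B = emeasure (distr (density lborel ?h) (lborel \<Otimes>\<^sub>M lborel) (\<lambda>x. (x, T - x))) B"
    using True by (simp add: canon_kernel_def)
  also have "\<dots> = emeasure (density lborel ?h) ((\<lambda>x. (x, T - x)) -` B \<inter> space (density lborel ?h))"
    by (rule emeasure_distr[OF phi B])
  also have "\<dots> = (\<integral>\<^sup>+ x. ?h x * indicator ((\<lambda>x. (x, T - x)) -` B) x \<partial>lborel)"
  proof -
    have pm: "(\<lambda>x. (x, T - x)) \<in> measurable lborel (lborel \<Otimes>\<^sub>M lborel)" by measurable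
    have "(\<lambda>x. (x, T - x)) -` B \<in> sets lborel" using measurable_sets[OF pm B] by simp
    from emeasure_density[OF hm this] show ?thesis by simp
  qed
  also have "\<dots> = (\<integral>\<^sup>+ x. ennreal (\<rho> v x * \<rho> w (T - x)) * indicator B (x, T - x) / conv \<rho> v w T \<partial>lborel)"
  proof (rule nn_integral_cong)
    fix x
    have "?h x = ennreal (\<rho> v x * \<rho> w (T - x)) / conv \<rho> v w T" by (simp only: ind_rho)
    moreover have "indicator ((\<lambda>x. (x, T - x)) -` B) x = (indicator B (x, T - x) :: ennreal)"
      by (simp split: split_indicator)
    ultimately show "?h x * indicator ((\<lambda>x. (x, T - x)) -` B) x = ennreal (\<rho> v x * \<rho> w (T - x)) * indicator B (x, T - x) / conv \<rho> v w T"
      by (simp only: ennreal_divide_times ennreal_times_divide)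
  qed
  also have "\<dots> = (\<integral>\<^sup>+ x. ennreal (\<rho> v x * \<rho> w (T - x)) * indicator B (x, T - x) \<partial>lborel) / conv \<rho> v w T"
    by (rule nn_integral_divide) measurable
  finally show ?thesis using True by simp
next
  case False
  have eq: "canon_kernel \<rho> v w T = return (lborel \<Otimes>\<^sub>M lborel) (T / 2, T / 2)"
    unfolding canon_kernel_def by (rule if_not_P[OF False])
  show ?thesis unfolding eq if_not_P[OF False] using B by (simp add: emeasure_return)
qed

lemma K_sets: "sets (canon_kernel \<rho> v w T) = sets (lborel \<Otimes>\<^sub>M lborel)"
  by (simp add: canon_kernel_def)

lemma K_prob: "prob_space (canon_kernel \<rho> v w T)"
proof (cases "0 < conv \<rho> v w T \<and> conv \<rho> v w T < \<infinity>")
  case True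
  have sp: "space (canon_kernel \<rho> v w T) = space (lborel \<Otimes>\<^sub>M lborel)"
    using K_sets by (rule sets_eq_imp_space_eq)
  have U: "UNIV \<in> sets (lborel \<Otimes>\<^sub>M lborel)"
    using sets.top[of "lborel \<Otimes>\<^sub>M lborel"] by (simp add: space_pair_measure)
  have "emeasure (canon_kernel \<rho> v w T) (space (canon_kernel \<rho> v w T)) = 1"
    unfolding sp using True U
    by (subst K_emeasure) (auto simp: space_pair_measure conv_alt[symmetric] ennreal_divide_self)
  then show ?thesis by (rule prob_spaceI)
next
  case False
  have eq: "canon_kernel \<rho> v w T = return (lborel \<Otimes>\<^sub>M lborel) (T / 2, T / 2)"
    unfolding canon_kernel_def by (rule if_not_P[OF False])
  show ?thesis unfolding eq by (simp add: prob_space_return space_pair_measure)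
qed

lemma K_meas[measurable]: "(\<lambda>T. canon_kernel \<rho> v w T) \<in> measurable borel (subprob_algebra (lborel \<Otimes>\<^sub>M lborel))"
proof (rule measurable_subprob_algebra)
  fix T show "subprob_space (canon_kernel \<rho> v w T)"
    using K_prob prob_space_imp_subprob_space by blast
  show "sets (canon_kernel \<rho> v w T) = sets (lborel \<Otimes>\<^sub>M lborel)" by (rule K_sets)
next
  fix B :: "(real \<times> real) set" assume B[measurable]: "B \<in> sets (lborel \<Otimes>\<^sub>M lborel)"
  show "(\<lambda>T. emeasure (canon_kernel \<rho> v w T) B) \<in> borel_measurable borel"
    unfolding K_emeasure[OF B] by measurable
qed


lemma energy:
  assumes ceq: "\<And>T. 0 \<le> T \<Longrightarrow> conv \<rho> v w T = conv \<rho> v' w' T"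
    and B[measurable]: "B \<in> sets (lborel \<Otimes>\<^sub>M lborel)"
  shows "(\<integral>\<^sup>+ eb. \<integral>\<^sup>+ ea. ennreal (\<rho> v ea * \<rho> w eb) * emeasure (canon_kernel \<rho> v' w' (ea + eb)) B \<partial>lborel \<partial>lborel)
       = (\<integral>\<^sup>+ eb. \<integral>\<^sup>+ ea. ennreal (\<rho> v' ea * \<rho> w' eb) * indicator B (ea, eb) \<partial>lborel \<partial>lborel)"
proof -
  define \<Psi> where "\<Psi> T = emeasure (canon_kernel \<rho> v' w' T) B" for T
  have \<Psi>m[measurable]: "\<Psi> \<in> borel_measurable borel"
    unfolding \<Psi>_def using measurable_compose[OF K_meas measurable_emeasure_subprob_algebra[OF B]] .
  define X where "X T = (\<integral>\<^sup>+ x. ennreal (\<rho> v' x * \<rho> w' (T - x)) * indicator B (x, T - x) \<partial>lborel)" for T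
  have "(\<integral>\<^sup>+ eb. \<integral>\<^sup>+ ea. ennreal (\<rho> v ea * \<rho> w eb) * emeasure (canon_kernel \<rho> v' w' (ea + eb)) B \<partial>lborel \<partial>lborel)
      = (\<integral>\<^sup>+ T. conv \<rho> v w T * \<Psi> T \<partial>lborel)"
    unfolding \<Psi>_def[symmetric] by (rule conv_int) (rule \<Psi>m)
  also have "\<dots> = (\<integral>\<^sup>+ T. conv \<rho> v' w' T * \<Psi> T \<partial>lborel)"
  proof (rule nn_integral_cong)
    fix T show "conv \<rho> v w T * \<Psi> T = conv \<rho> v' w' T * \<Psi> T"
      by (cases "T < 0") (simp_all add: conv_neg ceq)
  qed
  also have "\<dots> = (\<integral>\<^sup>+ T. X T \<partial>lborel)"
  proof (rule nn_integral_cong_AE)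
    have "AE T in lborel. conv \<rho> v' w' T \<noteq> \<infinity>"
      by (rule nn_integral_PInf_AE) (simp_all add: conv_total)
    then show "AE T in lborel. conv \<rho> v' w' T * \<Psi> T = X T"
    proof (rule AE_mp, intro AE_I2 impI)
      fix T assume fin: "conv \<rho> v' w' T \<noteq> \<infinity>"
      show "conv \<rho> v' w' T * \<Psi> T = X T"
      proof (cases "conv \<rho> v' w' T = 0")
        case True
        have "X T \<le> (\<integral>\<^sup>+ x. ennreal (\<rho> v' x * \<rho> w' (T - x)) \<partial>lborel)"
          unfolding X_def by (intro nn_integral_mono) (simp split: split_indicator)
        then have "X T = 0" using True by (simp add: conv_alt)
        then show ?thesis using True by simp
      next
        case False
        then have P: "0 < conv \<rho> v' w' T \<and> conv \<rho> v' w' T < \<infinity>"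
          using fin by (simp add: top.not_eq_extremum zero_less_iff_neq_zero)
        have "\<Psi> T = X T / conv \<rho> v' w' T"
          unfolding \<Psi>_def K_emeasure[OF B] X_def using P by simp
        then show ?thesis using False fin
          by (simp add: ennreal_times_divide mult.commute[of "conv \<rho> v' w' T"] ennreal_mult_divide_eq)
      qed
    qed
  qed
  also have "\<dots> = (\<integral>\<^sup>+ x. \<integral>\<^sup>+ T. ennreal (\<rho> v' x * \<rho> w' (T - x)) * indicator B (x, T - x) \<partial>lborel \<partial>lborel)"
    unfolding X_def by (rule lborel_pair.Fubini') measurable
  also have "\<dots> = (\<integral>\<^sup>+ x. \<integral>\<^sup>+ t. ennreal (\<rho> v' x * \<rho> w' t) * indicator B (x, t) \<partial>lborel \<partial>lborel)"
  proof (rule nn_integral_cong)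
    fix x
    have "(\<lambda>T. ennreal (\<rho> v' x * \<rho> w' (T - x)) * indicator B (x, T - x)) \<in> borel_measurable borel" by measurable
    from nn_integral_real_affine[OF this, of 1 x]
    show "(\<integral>\<^sup>+ T. ennreal (\<rho> v' x * \<rho> w' (T - x)) * indicator B (x, T - x) \<partial>lborel)
        = (\<integral>\<^sup>+ t. ennreal (\<rho> v' x * \<rho> w' t) * indicator B (x, t) \<partial>lborel)" by simp
  qed
  also have "\<dots> = (\<integral>\<^sup>+ eb. \<integral>\<^sup>+ ea. ennreal (\<rho> v' ea * \<rho> w' eb) * indicator B (ea, eb) \<partial>lborel \<partial>lborel)"
    by (rule lborel_pair.Fubini'[symmetric]) measurable
  finally show ?thesis .
qed

end



abbreviation NN :: "('v \<times> real) measure" where "NN \<equiv> count_space UNIV \<Otimes>\<^sub>M lborel"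

lemma sf_NN: "sigma_finite_measure (NN :: ('v::finite \<times> real) measure)"
  by (intro sigma_finite_pair_measure sigma_finite_measure_count_space_finite lborel.sigma_finite_measure_axioms) simp

lemma int_NN:
  fixes h :: "'v::finite \<times> real \<Rightarrow> ennreal"
  assumes [measurable]: "h \<in> borel_measurable NN"
  shows "integral\<^sup>N NN h = (\<Sum>v\<in>UNIV. \<integral>\<^sup>+ e. h (v, e) \<partial>lborel)"
proof -
  have "integral\<^sup>N NN h = (\<integral>\<^sup>+ x. \<integral>\<^sup>+ y. h (x, y) \<partial>lborel \<partial>count_space UNIV)"
    by (rule lborel.nn_integral_fst[symmetric]) simp
  also have "\<dots> = (\<Sum>v\<in>UNIV. \<integral>\<^sup>+ e. h (v, e) \<partial>lborel)"
    by (rule nn_integral_count_space_finite) simp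
  finally show ?thesis .
qed

lemma meas_NN:
  fixes h :: "'v::finite \<times> real \<Rightarrow> 'b"
  assumes "\<And>v. (\<lambda>e. h (v, e)) \<in> measurable borel K"
  shows "h \<in> measurable NN K"
  by (rule measurable_pair_measure_countable1) (use assms in simp_all)

lemma upd_meas:
  assumes "f \<in> measurable L (PiM I Mi)" "g \<in> measurable L (Mi i)"
  shows "(\<lambda>z. (f z)(i := g z)) \<in> measurable L (PiM (insert i I) Mi)"
  using measurable_compose[OF measurable_Pair[OF assms] measurable_add_dim] by simp

lemma tp_meas:
  fixes g :: "(nat \<Rightarrow> 'v::finite) \<Rightarrow> 'b"
  shows "(\<lambda>c. g (\<lambda>k. fst (c k))) \<in> measurable (state_space M) (count_space UNIV)"
proof -
  define E where "E = {t :: nat \<Rightarrow> 'v. \<forall>x. (x \<in> {..<M} \<longrightarrow> t x \<in> UNIV) \<and> (x \<notin> {..<M} \<longrightarrow> t x = fst (undefined :: 'v \<times> real))}"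
  have fE: "finite E" unfolding E_def by (rule finite_set_of_finite_funs) auto
  have "(\<lambda>c::'v state. \<lambda>k. fst (c k)) \<in> measurable (state_space M) (count_space E)"
  proof (subst measurable_count_space_eq_countable)
    show "countable E" using fE by (rule countable_finite)
    show "(\<lambda>c::'v state. \<lambda>k. fst (c k)) \<in> space (state_space M) \<rightarrow> E \<and>
      (\<forall>a\<in>E. (\<lambda>c::'v state. \<lambda>k. fst (c k)) -` {a} \<inter> space (state_space M) \<in> sets (state_space M))"
    proof safe
      fix c :: "'v state" assume "c \<in> space (state_space M)"
      then show "(\<lambda>k. fst (c k)) \<in> E" by (auto simp: E_def state_space_def space_PiM PiE_def extensional_def)
    next
      fix t assume t: "t \<in> E"
      have "(\<lambda>c::'v state. \<lambda>k. fst (c k)) -` {t} \<inter> space (state_space M) = {c \<in> space (state_space M). \<forall>k\<in>{..<M}. fst (c k) = t k}"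
        using t by (auto simp: E_def state_space_def space_PiM PiE_def extensional_def fun_eq_iff) (metis lessThan_iff)
      also have "\<dots> \<in> sets (state_space M)"
        unfolding state_space_def by measurable
      finally show "(\<lambda>c::'v state. \<lambda>k. fst (c k)) -` {t} \<inter> space (state_space M) \<in> sets (state_space M)" .
    qed
  qed
  then show ?thesis by (rule measurable_compose) simp
qed

lemma tp_borel[measurable]:
  fixes g :: "(nat \<Rightarrow> 'v::finite) \<Rightarrow> 'b::topological_space"
  shows "(\<lambda>c. g (\<lambda>k. fst (c k))) \<in> borel_measurable (state_space M)"
  using measurable_compose[OF tp_meas[of g M], of id borel] by simp

lemma decomp:
  fixes H :: "'v::finite state \<Rightarrow> ennreal"
  assumes ij: "i < M" "j < M" "i \<noteq> j" and H: "H \<in> borel_measurable (state_space M)"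
  shows "integral\<^sup>N (state_space M) H = (\<integral>\<^sup>+ x. (\<Sum>w\<in>UNIV. \<Sum>v\<in>UNIV.
     \<integral>\<^sup>+ eb. \<integral>\<^sup>+ ea. H (x(j := (w, eb), i := (v, ea))) \<partial>lborel \<partial>lborel) \<partial>PiM ({..<M} - {i,j}) (\<lambda>_. NN))"
proof -
  interpret P: product_sigma_finite "\<lambda>_. NN :: ('v \<times> real) measure"
    unfolding product_sigma_finite_def using sf_NN by simp
  define I0 where "I0 = {..<M} - {i,j}"
  have U: "{..<M} = insert i (insert j I0)" using ij unfolding I0_def by auto
  have fin: "finite (insert j I0)" "i \<notin> insert j I0" "finite I0" "j \<notin> I0"
    using ij unfolding I0_def by auto
  have HS: "H \<in> borel_measurable (PiM (insert i (insert j I0)) (\<lambda>_. NN))"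
    using H unfolding state_space_def U .
  have "integral\<^sup>N (state_space M) H = (\<integral>\<^sup>+ y. \<integral>\<^sup>+ a. H (y(i := a)) \<partial>NN \<partial>PiM (insert j I0) (\<lambda>_. NN))"
    unfolding state_space_def U by (rule P.product_nn_integral_insert[OF fin(1,2) HS])
  also have "\<dots> = (\<integral>\<^sup>+ x. \<integral>\<^sup>+ b. \<integral>\<^sup>+ a. H (x(j := b, i := a)) \<partial>NN \<partial>NN \<partial>PiM I0 (\<lambda>_. NN))"
  proof (rule P.product_nn_integral_insert[OF fin(3,4)])
    have "(\<lambda>z. H ((fst z)(i := snd z))) \<in> borel_measurable (PiM (insert j I0) (\<lambda>_. NN) \<Otimes>\<^sub>M NN)"
      using measurable_compose[OF measurable_add_dim HS] by (simp add: case_prod_beta)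
    then have "case_prod (\<lambda>y a. H (y(i := a))) \<in> borel_measurable (PiM (insert j I0) (\<lambda>_. NN) \<Otimes>\<^sub>M NN)"
      by (simp add: case_prod_beta)
    then show "(\<lambda>y. \<integral>\<^sup>+ a. H (y(i := a)) \<partial>NN) \<in> borel_measurable (PiM (insert j I0) (\<lambda>_. NN))"
      by (rule sigma_finite_measure.borel_measurable_nn_integral[OF sf_NN])
  qed
  also have "\<dots> = (\<integral>\<^sup>+ x. (\<Sum>w\<in>UNIV. \<Sum>v\<in>UNIV.
     \<integral>\<^sup>+ eb. \<integral>\<^sup>+ ea. H (x(j := (w, eb), i := (v, ea))) \<partial>lborel \<partial>lborel) \<partial>PiM I0 (\<lambda>_. NN))"
  proof (rule nn_integral_cong)
    fix x :: "'v state" assume x: "x \<in> space (PiM I0 (\<lambda>_. NN))"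
    have xj: "x(j := b) \<in> space (PiM (insert j I0) (\<lambda>_. NN))" for b
      using measurable_space[OF measurable_component_update[OF x fin(4)]] by (simp add: space_pair_measure)
    have Hi: "(\<lambda>a. H (y(i := a))) \<in> borel_measurable NN" if "y \<in> space (PiM (insert j I0) (\<lambda>_. NN))" for y
      using measurable_compose[OF measurable_component_update[OF that fin(2)] HS] .
    have Gm: "(\<lambda>y. \<integral>\<^sup>+ a. H (y(i := a)) \<partial>NN) \<in> borel_measurable (PiM (insert j I0) (\<lambda>_. NN))"
    proof -
      have "(\<lambda>z. H ((fst z)(i := snd z))) \<in> borel_measurable (PiM (insert j I0) (\<lambda>_. NN) \<Otimes>\<^sub>M NN)"
        using measurable_compose[OF measurable_add_dim HS] by (simp add: case_prod_beta)
      then have "case_prod (\<lambda>y a. H (y(i := a))) \<in> borel_measurable (PiM (insert j I0) (\<lambda>_. NN) \<Otimes>\<^sub>M NN)"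
        by (simp add: case_prod_beta)
      then show ?thesis
        by (rule sigma_finite_measure.borel_measurable_nn_integral[OF sf_NN])
    qed
    have m1: "(\<lambda>b. \<integral>\<^sup>+ a. H (x(j := b, i := a)) \<partial>NN) \<in> borel_measurable NN"
      using measurable_compose[OF measurable_component_update[OF x fin(4)] Gm] .
    have m2: "(\<lambda>eb. \<integral>\<^sup>+ ea. H (x(j := (w, eb), i := (v, ea))) \<partial>lborel) \<in> borel_measurable lborel" for v w
    proof -
      have c1: "(\<lambda>z::real\<times>real. x(j := (w, fst z))) \<in> measurable (lborel \<Otimes>\<^sub>M lborel) (PiM (insert j I0) (\<lambda>_. NN))"
        by (rule upd_meas) (use x in \<open>simp_all\<close>)
      have c2: "(\<lambda>z::real\<times>real. x(j := (w, fst z), i := (v, snd z))) \<in> measurable (lborel \<Otimes>\<^sub>M lborel) (PiM (insert i (insert j I0)) (\<lambda>_. NN))"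
        by (rule upd_meas[OF c1]) simp
      have "case_prod (\<lambda>eb ea. H (x(j := (w, eb), i := (v, ea)))) \<in> borel_measurable (lborel \<Otimes>\<^sub>M lborel)"
        using measurable_compose[OF c2 HS] by (simp add: case_prod_beta)
      then show ?thesis by (rule lborel.borel_measurable_nn_integral)
    qed
    have "(\<integral>\<^sup>+ b. \<integral>\<^sup>+ a. H (x(j := b, i := a)) \<partial>NN \<partial>NN)
        = (\<Sum>w\<in>UNIV. \<integral>\<^sup>+ eb. \<integral>\<^sup>+ a. H (x(j := (w, eb), i := a)) \<partial>NN \<partial>lborel)"
      by (rule int_NN[OF m1])
    also have "\<dots> = (\<Sum>w\<in>UNIV. \<integral>\<^sup>+ eb. (\<Sum>v\<in>UNIV. \<integral>\<^sup>+ ea. H (x(j := (w, eb), i := (v, ea))) \<partial>lborel) \<partial>lborel)"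
      by (intro sum.cong refl nn_integral_cong int_NN Hi xj)
    also have "\<dots> = (\<Sum>w\<in>UNIV. \<Sum>v\<in>UNIV. \<integral>\<^sup>+ eb. \<integral>\<^sup>+ ea. H (x(j := (w, eb), i := (v, ea))) \<partial>lborel \<partial>lborel)"
      by (intro sum.cong refl nn_integral_sum) (use m2 in simp_all)
    finally show "(\<integral>\<^sup>+ b. \<integral>\<^sup>+ a. H (x(j := b, i := a)) \<partial>NN \<partial>NN)
        = (\<Sum>w\<in>UNIV. \<Sum>v\<in>UNIV. \<integral>\<^sup>+ eb. \<integral>\<^sup>+ ea. H (x(j := (w, eb), i := (v, ea))) \<partial>lborel \<partial>lborel)" .
  qed
  finally show ?thesis unfolding I0_def .
qed




definition tp :: "'v state \<Rightarrow> (nat \<Rightarrow> 'v)" where "tp c = (\<lambda>k. fst (c k))"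
definition dn :: "('v \<Rightarrow> real \<Rightarrow> real) \<Rightarrow> nat \<Rightarrow> 'v state \<Rightarrow> real" where
  "dn \<rho> M c = (\<Prod>k<M. \<rho> (fst (c k)) (snd (c k)))"

locale setting = dens \<rho> for \<rho> :: "'v::finite \<Rightarrow> real \<Rightarrow> real" +
  fixes r :: "'v \<Rightarrow> 'v \<Rightarrow> 'v \<Rightarrow> 'v \<Rightarrow> real" and p :: "('v \<Rightarrow> nat) \<Rightarrow> real" and M :: nat
  assumes r_nonneg: "\<And>v w v' w'. 0 \<le> r v w v' w'"
    and conv_eq: "\<And>v w v' w' T. 0 < r v w v' w' \<Longrightarrow> 0 \<le> T \<Longrightarrow> conv \<rho> v w T = conv \<rho> v' w' T"
    and stat: "stationary_counts r M p"
begin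

abbreviation S :: "'v state measure" where "S \<equiv> state_space M"

lemma p_nonneg: "0 \<le> p n" using stat by (simp add: stationary_counts_def)

lemma q_nonneg: "0 \<le> q_of p M t"
  unfolding q_of_def by (intro divide_nonneg_nonneg mult_nonneg_nonneg p_nonneg prod_nonneg) auto

lemma dn_nonneg: "0 \<le> dn \<rho> M c" by (simp add: dn_def prod_nonneg dens_nonneg)

lemma rhoN: "(\<lambda>a. \<rho> (fst a) (snd a)) \<in> borel_measurable (NN :: ('v \<times> real) measure)"
  by (rule meas_NN) simp

lemma comp_meas: "k < M \<Longrightarrow> (\<lambda>c. c k) \<in> measurable S NN"
  unfolding state_space_def by (rule measurable_component_singleton) simp

lemma dn_meas[measurable]: "(\<lambda>c. dn \<rho> M c) \<in> borel_measurable S"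
  unfolding dn_def
proof (rule borel_measurable_prod)
  fix k assume "k \<in> {..<M}"
  then show "(\<lambda>c. \<rho> (fst (c k)) (snd (c k))) \<in> borel_measurable S"
    using measurable_compose[OF comp_meas rhoN] by simp
qed

lemma tpg_meas[measurable]:
  fixes g :: "(nat \<Rightarrow> 'v) \<Rightarrow> 'b::topological_space"
  shows "(\<lambda>c. g (tp c)) \<in> borel_measurable S"
  unfolding tp_def by (rule tp_borel)

lemma inv_density: "inv_measure M \<rho> p = density S (\<lambda>c. ennreal (q_of p M (tp c) * dn \<rho> M c))"
  by (simp add: inv_measure_def q_of_def dn_def tp_def)

lemma upd2_meas:
  assumes ij: "i < M" "j < M" and f: "f \<in> measurable L S" and g: "g \<in> measurable L NN" and h: "h \<in> measurable L NN"
  shows "(\<lambda>z. (f z)(i := g z, j := h z)) \<in> measurable L S"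
proof -
  have U: "\<And>k. k < M \<Longrightarrow> insert k {..<M} = {..<M}" by auto
  have "(\<lambda>z. (f z)(i := g z)) \<in> measurable L S"
    using upd_meas[where i=i, OF f[unfolded state_space_def] g] U[OF ij(1)] unfolding state_space_def by simp
  from upd_meas[where i=j, OF this[unfolded state_space_def] h] U[OF ij(2)] show ?thesis
    unfolding state_space_def by simp
qed

lemma term_meas:
  assumes ij: "i < M" "j < M" and A: "A \<in> sets S"
  shows "(\<lambda>c. emeasure (canon_kernel \<rho> v' w' (snd (c i) + snd (c j)))
     {xy \<in> space (lborel \<Otimes>\<^sub>M lborel). c(i := (v', fst xy), j := (w', snd xy)) \<in> A}) \<in> borel_measurable S"
proof (rule emeasure_measurable_subprob_algebra2)
  have [measurable]: "(\<lambda>c. snd (c i)) \<in> borel_measurable S" "(\<lambda>c. snd (c j)) \<in> borel_measurable S"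
    using measurable_compose[OF comp_meas measurable_snd] ij by auto
  have "(\<lambda>c. snd (c i) + snd (c j)) \<in> borel_measurable S" by measurable
  then show "(\<lambda>c. canon_kernel \<rho> v' w' (snd (c i) + snd (c j))) \<in> measurable S (subprob_algebra (lborel \<Otimes>\<^sub>M lborel))"
    using measurable_compose[OF _ K_meas] by blast
  let ?U = "\<lambda>z::'v state \<times> (real \<times> real). (fst z)(i := (v', fst (snd z)), j := (w', snd (snd z)))"
  have Um: "?U \<in> measurable (S \<Otimes>\<^sub>M (lborel \<Otimes>\<^sub>M lborel)) S"
    by (rule upd2_meas[OF ij]) measurable
  have "(SIGMA c:space S. {xy \<in> space (lborel \<Otimes>\<^sub>M lborel). c(i := (v', fst xy), j := (w', snd xy)) \<in> A})
      = ?U -` A \<inter> space (S \<Otimes>\<^sub>M (lborel \<Otimes>\<^sub>M lborel))"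
    by (auto simp: space_pair_measure)
  also have "\<dots> \<in> sets (S \<Otimes>\<^sub>M (lborel \<Otimes>\<^sub>M lborel))"
    by (rule measurable_sets[OF Um A])
  finally show "(SIGMA c:space S. {xy \<in> space (lborel \<Otimes>\<^sub>M lborel). c(i := (v', fst xy), j := (w', snd xy)) \<in> A})
      \<in> sets (S \<Otimes>\<^sub>M (lborel \<Otimes>\<^sub>M lborel))" .
qed


lemma sec_meas:
  assumes ij: "i < M" "j < M" "i \<noteq> j" and x: "x \<in> space (PiM ({..<M} - {i,j}) (\<lambda>_. NN))" and A: "A \<in> sets S"
  shows "{xy \<in> space (lborel \<Otimes>\<^sub>M lborel). x(i := (v', fst xy), j := (w', snd xy)) \<in> A} \<in> sets (lborel \<Otimes>\<^sub>M lborel)"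
proof -
  let ?I0 = "{..<M} - {i,j}"
  have c0: "(\<lambda>z::real\<times>real. x) \<in> measurable (lborel \<Otimes>\<^sub>M lborel) (PiM ?I0 (\<lambda>_. NN))"
    using x by simp
  have c1: "(\<lambda>z::real\<times>real. x(i := (v', fst z))) \<in> measurable (lborel \<Otimes>\<^sub>M lborel) (PiM (insert i ?I0) (\<lambda>_. NN))"
    by (rule upd_meas[OF c0]) simp
  have c2: "(\<lambda>z::real\<times>real. x(i := (v', fst z), j := (w', snd z))) \<in> measurable (lborel \<Otimes>\<^sub>M lborel) (PiM (insert j (insert i ?I0)) (\<lambda>_. NN))"
    by (rule upd_meas[OF c1]) simp
  have U: "insert j (insert i ?I0) = {..<M}" using ij by auto
  have c3: "(\<lambda>z::real\<times>real. x(i := (v', fst z), j := (w', snd z))) \<in> measurable (lborel \<Otimes>\<^sub>M lborel) S"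
    using c2 unfolding U state_space_def .
  have "{xy \<in> space (lborel \<Otimes>\<^sub>M lborel). x(i := (v', fst xy), j := (w', snd xy)) \<in> A}
     = (\<lambda>z::real\<times>real. x(i := (v', fst z), j := (w', snd z))) -` A \<inter> space (lborel \<Otimes>\<^sub>M lborel)" by auto
  also have "\<dots> \<in> sets (lborel \<Otimes>\<^sub>M lborel)" by (rule measurable_sets[OF c3 A])
  finally show ?thesis .
qed

lemma dn_split:
  assumes ij: "i < M" "j < M" "i \<noteq> j"
  shows "dn \<rho> M (x(j := (w, eb), i := (v, ea))) = \<rho> v ea * \<rho> w eb * (\<Prod>k\<in>{..<M}-{i,j}. \<rho> (fst (x k)) (snd (x k)))"
proof -
  let ?c = "x(j := (w, eb), i := (v, ea))"
  have "dn \<rho> M ?c = \<rho> (fst (?c i)) (snd (?c i)) * (\<Prod>k\<in>{..<M}-{i}. \<rho> (fst (?c k)) (snd (?c k)))"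
    unfolding dn_def by (rule prod.remove) (use ij in auto)
  also have "(\<Prod>k\<in>{..<M}-{i}. \<rho> (fst (?c k)) (snd (?c k))) = \<rho> (fst (?c j)) (snd (?c j)) * (\<Prod>k\<in>{..<M}-{i}-{j}. \<rho> (fst (?c k)) (snd (?c k)))"
    by (rule prod.remove) (use ij in auto)
  also have "{..<M}-{i}-{j} = {..<M}-{i,j}" by auto
  also have "(\<Prod>k\<in>{..<M}-{i,j}. \<rho> (fst (?c k)) (snd (?c k))) = (\<Prod>k\<in>{..<M}-{i,j}. \<rho> (fst (x k)) (snd (x k)))"
    by (rule prod.cong) auto
  finally show ?thesis using ij by (simp add: mult.assoc fun_upd_def)
qed


lemma T1:
  assumes ij: "i < M" "j < M" "i \<noteq> j" and A[measurable]: "A \<in> sets S"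
  shows "(\<integral>\<^sup>+ c. ennreal (q_of p M (tp c) * dn \<rho> M c) *
      (ennreal (r (fst (c i)) (fst (c j)) v' w') * emeasure (canon_kernel \<rho> v' w' (snd (c i) + snd (c j)))
        {xy \<in> space (lborel \<Otimes>\<^sub>M lborel). c(i := (v', fst xy), j := (w', snd xy)) \<in> A}) \<partial>S)
    = (\<integral>\<^sup>+ c. ennreal (dn \<rho> M c * (\<Sum>v\<in>UNIV. \<Sum>w\<in>UNIV. q_of p M ((tp c)(i := v, j := w)) * r v w v' w'))
        * indicator {c. fst (c i) = v' \<and> fst (c j) = w'} c * indicator A c \<partial>S)"
    (is "integral\<^sup>N S ?L = integral\<^sup>N S ?R")
proof -
  have ci[measurable]: "(\<lambda>c. fst (c i)) \<in> measurable S (count_space UNIV)" "(\<lambda>c. fst (c j)) \<in> measurable S (count_space UNIV)"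
    using measurable_compose[OF comp_meas measurable_fst] ij by auto
  have ci2: "(\<lambda>c. g (fst (c i)) (fst (c j))) \<in> borel_measurable S" for g :: "'v \<Rightarrow> 'v \<Rightarrow> real"
  proof -
    have "(\<lambda>c. g (tp c i) (tp c j)) \<in> borel_measurable S" by (rule tpg_meas)
    then show ?thesis by (simp add: tp_def)
  qed
  have Lm: "?L \<in> borel_measurable S"
  proof -
    have [measurable]: "(\<lambda>c. r (fst (c i)) (fst (c j)) v' w') \<in> borel_measurable S" by (rule ci2)
    have [measurable]: "(\<lambda>c. emeasure (canon_kernel \<rho> v' w' (snd (c i) + snd (c j)))
        {xy \<in> space (lborel \<Otimes>\<^sub>M lborel). c(i := (v', fst xy), j := (w', snd xy)) \<in> A}) \<in> borel_measurable S"
      by (rule term_meas[OF ij(1,2) A])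
    show ?thesis by measurable
  qed
  have Rm: "?R \<in> borel_measurable S"
  proof -
    have [measurable]: "(\<lambda>c. (\<Sum>v\<in>UNIV. \<Sum>w\<in>UNIV. q_of p M ((tp c)(i := v, j := w)) * r v w v' w')) \<in> borel_measurable S"
      by (rule tpg_meas[of "\<lambda>t. \<Sum>v\<in>UNIV. \<Sum>w\<in>UNIV. q_of p M (t(i := v, j := w)) * r v w v' w'"])
    have [measurable]: "{c \<in> space S. fst (c i) = v' \<and> fst (c j) = w'} \<in> sets S" by measurable
    have "(\<lambda>c. indicator {c. fst (c i) = v' \<and> fst (c j) = w'} c :: ennreal) \<in> borel_measurable S"
      using borel_measurable_indicator'[where A="\<lambda>_. {c. fst (c i) = v' \<and> fst (c j) = w'}" and f="\<lambda>c. c" and M=S] by simp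
    then show ?thesis by measurable
  qed
  let ?I0 = "{..<M} - {i,j}"
  have "integral\<^sup>N S ?L = (\<integral>\<^sup>+ x. (\<Sum>w\<in>UNIV. \<Sum>v\<in>UNIV.
     \<integral>\<^sup>+ eb. \<integral>\<^sup>+ ea. ?L (x(j := (w, eb), i := (v, ea))) \<partial>lborel \<partial>lborel) \<partial>PiM ?I0 (\<lambda>_. NN))"
    by (rule decomp[OF ij Lm])
  also have "\<dots> = (\<integral>\<^sup>+ x. (\<Sum>w\<in>UNIV. \<Sum>v\<in>UNIV.
     \<integral>\<^sup>+ eb. \<integral>\<^sup>+ ea. ?R (x(j := (w, eb), i := (v, ea))) \<partial>lborel \<partial>lborel) \<partial>PiM ?I0 (\<lambda>_. NN))"
  proof (rule nn_integral_cong)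
    fix x :: "'v state" assume x: "x \<in> space (PiM ?I0 (\<lambda>_. NN))"
    define P where "P = (\<Prod>k\<in>?I0. \<rho> (fst (x k)) (snd (x k)))"
    have P0: "0 \<le> P" unfolding P_def by (simp add: prod_nonneg dens_nonneg)
    define Bx where "Bx = {xy \<in> space (lborel \<Otimes>\<^sub>M lborel). x(i := (v', fst xy), j := (w', snd xy)) \<in> A}"
    have Bx[measurable]: "Bx \<in> sets (lborel \<Otimes>\<^sub>M lborel)" unfolding Bx_def by (rule sec_meas[OF ij x A])
    define Q where "Q v w = q_of p M ((tp x)(i := v, j := w))" for v w
    define Y where "Y = (\<Sum>v\<in>UNIV. \<Sum>w\<in>UNIV. Q v w * r v w v' w')"
    define G where "G = (\<integral>\<^sup>+ eb. \<integral>\<^sup>+ ea. ennreal (\<rho> v' ea * \<rho> w' eb) * indicator Bx (ea, eb) \<partial>lborel \<partial>lborel)"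
    have tpc: "tp (x(j := (w, eb), i := (v, ea))) = (tp x)(i := v, j := w)" for w eb v ea
      using ij by (auto simp: tp_def fun_eq_iff)
    have tpc2: "(tp (x(j := (w, eb), i := (v, ea))))(i := v0, j := w0) = (tp x)(i := v0, j := w0)" for w eb v ea v0 w0
      using ij by (auto simp: tp_def fun_eq_iff)
    have secc: "(x(j := (w, eb), i := (v, ea)))(i := a, j := b) = x(i := a, j := b)" for w eb v ea a b
      using ij by (auto simp: fun_eq_iff)
    have Psi[measurable]: "(\<lambda>T. emeasure (canon_kernel \<rho> v' w' T) Bx) \<in> borel_measurable borel"
      using measurable_compose[OF K_meas measurable_emeasure_subprob_algebra[OF Bx]] .
    have Lx: "(\<integral>\<^sup>+ eb. \<integral>\<^sup>+ ea. ?L (x(j := (w, eb), i := (v, ea))) \<partial>lborel \<partial>lborel)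
        = ennreal (Q v w * P * r v w v' w') * G" for v w
    proof -
      have "(\<integral>\<^sup>+ eb. \<integral>\<^sup>+ ea. ?L (x(j := (w, eb), i := (v, ea))) \<partial>lborel \<partial>lborel)
          = (\<integral>\<^sup>+ eb. \<integral>\<^sup>+ ea. ennreal (Q v w * P * r v w v' w') * (ennreal (\<rho> v ea * \<rho> w eb) * emeasure (canon_kernel \<rho> v' w' (ea + eb)) Bx) \<partial>lborel \<partial>lborel)"
      proof (intro nn_integral_cong)
        fix eb ea
        have "q_of p M (tp (x(j := (w, eb), i := (v, ea)))) * dn \<rho> M (x(j := (w, eb), i := (v, ea))) = (Q v w * P) * (\<rho> v ea * \<rho> w eb)"
          unfolding tpc dn_split[OF ij] Q_def P_def by (simp add: mult_ac)
        moreover have "{xy \<in> space (lborel \<Otimes>\<^sub>M lborel). (x(j := (w, eb), i := (v, ea)))(i := (v', fst xy), j := (w', snd xy)) \<in> A} = Bx"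
          unfolding secc Bx_def ..
        moreover have "ennreal ((Q v w * P) * (\<rho> v ea * \<rho> w eb)) = ennreal (Q v w * P) * ennreal (\<rho> v ea * \<rho> w eb)"
          by (rule ennreal_mult) (simp_all add: q_nonneg Q_def P0 dens_nonneg)
        moreover have "ennreal (Q v w * P * r v w v' w') = ennreal (Q v w * P) * ennreal (r v w v' w')"
          by (rule ennreal_mult) (simp_all add: q_nonneg Q_def P0 r_nonneg)
        ultimately show "?L (x(j := (w, eb), i := (v, ea))) = ennreal (Q v w * P * r v w v' w') * (ennreal (\<rho> v ea * \<rho> w eb) * emeasure (canon_kernel \<rho> v' w' (ea + eb)) Bx)"
        proof -
          assume A1: "q_of p M (tp (x(j := (w, eb), i := (v, ea)))) * dn \<rho> M (x(j := (w, eb), i := (v, ea))) = (Q v w * P) * (\<rho> v ea * \<rho> w eb)"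
            and A2: "{xy \<in> space (lborel \<Otimes>\<^sub>M lborel). (x(j := (w, eb), i := (v, ea)))(i := (v', fst xy), j := (w', snd xy)) \<in> A} = Bx"
            and E1: "ennreal ((Q v w * P) * (\<rho> v ea * \<rho> w eb)) = ennreal (Q v w * P) * ennreal (\<rho> v ea * \<rho> w eb)"
            and E2: "ennreal (Q v w * P * r v w v' w') = ennreal (Q v w * P) * ennreal (r v w v' w')"
          have f1: "(x(j := (w, eb), i := (v, ea))) i = (v, ea)" and f2: "(x(j := (w, eb), i := (v, ea))) j = (w, eb)"
            using ij by auto
          have "?L (x(j := (w, eb), i := (v, ea))) = ennreal ((Q v w * P) * (\<rho> v ea * \<rho> w eb)) * (ennreal (r v w v' w') * emeasure (canon_kernel \<rho> v' w' (ea + eb)) Bx)"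
            by (simp only: f1 f2 fst_conv snd_conv A1 A2)
          also have "\<dots> = ennreal (Q v w * P * r v w v' w') * (ennreal (\<rho> v ea * \<rho> w eb) * emeasure (canon_kernel \<rho> v' w' (ea + eb)) Bx)"
            by (simp only: E1 E2, simp only: mult_ac)
          finally show ?thesis .
        qed
      qed
      also have "\<dots> = ennreal (Q v w * P * r v w v' w') * (\<integral>\<^sup>+ eb. \<integral>\<^sup>+ ea. ennreal (\<rho> v ea * \<rho> w eb) * emeasure (canon_kernel \<rho> v' w' (ea + eb)) Bx \<partial>lborel \<partial>lborel)"
        by (simp add: nn_integral_cmult)
      also have "\<dots> = ennreal (Q v w * P * r v w v' w') * G"
      proof (cases "r v w v' w' = 0")
        case True then show ?thesis by simp
      next
        case False
        then have "0 < r v w v' w'" using r_nonneg[of v w v' w'] by simp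
        then show ?thesis unfolding G_def using energy[OF conv_eq Bx] by simp
      qed
      finally show ?thesis .
    qed
    have Rx: "(\<integral>\<^sup>+ eb. \<integral>\<^sup>+ ea. ?R (x(j := (w, eb), i := (v, ea))) \<partial>lborel \<partial>lborel)
        = (if v = v' \<and> w = w' then ennreal (P * Y) * G else 0)" for v w
    proof (cases "v = v' \<and> w = w'")
      case True
      have "(\<integral>\<^sup>+ eb. \<integral>\<^sup>+ ea. ?R (x(j := (w, eb), i := (v, ea))) \<partial>lborel \<partial>lborel)
          = (\<integral>\<^sup>+ eb. \<integral>\<^sup>+ ea. ennreal (P * Y) * (ennreal (\<rho> v' ea * \<rho> w' eb) * indicator Bx (ea, eb)) \<partial>lborel \<partial>lborel)"
      proof (intro nn_integral_cong)
        fix eb ea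
        have vw: "v = v'" "w = w'" using True by auto
        have A1: "dn \<rho> M (x(j := (w, eb), i := (v, ea))) * (\<Sum>v0\<in>UNIV. \<Sum>w0\<in>UNIV. q_of p M ((tp (x(j := (w, eb), i := (v, ea))))(i := v0, j := w0)) * r v0 w0 v' w')
           = (P * Y) * (\<rho> v' ea * \<rho> w' eb)"
          unfolding tpc2 dn_split[OF ij] Q_def P_def Y_def vw by (simp add: mult_ac)
        have A2: "indicator A (x(j := (w, eb), i := (v, ea))) = (indicator Bx (ea, eb) :: ennreal)"
          unfolding Bx_def vw using ij by (simp add: space_pair_measure fun_upd_twist split: split_indicator)
        have A3: "indicator {c. fst (c i) = v' \<and> fst (c j) = w'} (x(j := (w, eb), i := (v, ea))) = (1::ennreal)"
          using ij vw by simp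
        have E1: "ennreal ((P * Y) * (\<rho> v' ea * \<rho> w' eb)) = ennreal (P * Y) * ennreal (\<rho> v' ea * \<rho> w' eb)"
          by (rule ennreal_mult) (simp_all add: P0 Y_def Q_def q_nonneg r_nonneg sum_nonneg dens_nonneg)
        show "?R (x(j := (w, eb), i := (v, ea))) = ennreal (P * Y) * (ennreal (\<rho> v' ea * \<rho> w' eb) * indicator Bx (ea, eb))"
          by (simp only: A1 A2 A3 mult_1_right) (subst E1, rule mult.assoc)
      qed
      also have "\<dots> = ennreal (P * Y) * G" unfolding G_def by (simp add: nn_integral_cmult)
      finally show ?thesis using True by simp
    next
      case False
      have Z: "?R (x(j := (w, eb), i := (v, ea))) = 0" for eb ea
        using False ij by (auto split: split_indicator)
      have "(\<integral>\<^sup>+ eb. \<integral>\<^sup>+ ea. ?R (x(j := (w, eb), i := (v, ea))) \<partial>lborel \<partial>lborel) = 0"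
        by (subst Z) simp
      then show ?thesis using False by (simp only: if_False)
    qed
    have "(\<Sum>w\<in>UNIV. \<Sum>v\<in>UNIV. \<integral>\<^sup>+ eb. \<integral>\<^sup>+ ea. ?L (x(j := (w, eb), i := (v, ea))) \<partial>lborel \<partial>lborel)
        = (\<Sum>w\<in>UNIV. \<Sum>v\<in>UNIV. ennreal (Q v w * P * r v w v' w')) * G"
      unfolding Lx by (simp add: sum_distrib_right)
    also have "\<dots> = ennreal (\<Sum>w\<in>UNIV. \<Sum>v\<in>UNIV. Q v w * P * r v w v' w') * G"
      by (simp add: sum_ennreal q_nonneg Q_def P0 r_nonneg sum_nonneg)
    also have "(\<Sum>w\<in>UNIV. \<Sum>v\<in>UNIV. Q v w * P * r v w v' w') = P * Y"
      unfolding Y_def by (subst sum.swap) (simp add: sum_distrib_left mult_ac)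
    also have "ennreal (P * Y) * G = (\<Sum>w\<in>UNIV. \<Sum>v\<in>UNIV. \<integral>\<^sup>+ eb. \<integral>\<^sup>+ ea. ?R (x(j := (w, eb), i := (v, ea))) \<partial>lborel \<partial>lborel)"
    proof -
      have in1: "(\<Sum>v\<in>UNIV. if v = v' \<and> w = w' then ennreal (P * Y) * G else 0) = (if w = w' then ennreal (P * Y) * G else 0)" for w
        by (cases "w = w'") simp_all
      show ?thesis unfolding Rx in1 by simp
    qed
    finally show "(\<Sum>w\<in>UNIV. \<Sum>v\<in>UNIV. \<integral>\<^sup>+ eb. \<integral>\<^sup>+ ea. ?L (x(j := (w, eb), i := (v, ea))) \<partial>lborel \<partial>lborel)
        = (\<Sum>w\<in>UNIV. \<Sum>v\<in>UNIV. \<integral>\<^sup>+ eb. \<integral>\<^sup>+ ea. ?R (x(j := (w, eb), i := (v, ea))) \<partial>lborel \<partial>lborel)" .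
  qed
  also have "\<dots> = integral\<^sup>N S ?R"
    by (rule decomp[OF ij Rm, symmetric])
  finally show ?thesis .
qed


lemma L_meas:
  assumes ij: "i < M" "j < M" and A: "A \<in> sets S"
  shows "(\<lambda>c. ennreal (q_of p M (tp c) * dn \<rho> M c) *
      (ennreal (r (fst (c i)) (fst (c j)) v' w') * emeasure (canon_kernel \<rho> v' w' (snd (c i) + snd (c j)))
        {xy \<in> space (lborel \<Otimes>\<^sub>M lborel). c(i := (v', fst xy), j := (w', snd xy)) \<in> A})) \<in> borel_measurable S"
proof -
  have [measurable]: "(\<lambda>c. r (fst (c i)) (fst (c j)) v' w') \<in> borel_measurable S"
    using tpg_meas[of "\<lambda>t. r (t i) (t j) v' w'"] by (simp add: tp_def)
  have [measurable]: "(\<lambda>c. emeasure (canon_kernel \<rho> v' w' (snd (c i) + snd (c j)))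
      {xy \<in> space (lborel \<Otimes>\<^sub>M lborel). c(i := (v', fst xy), j := (w', snd xy)) \<in> A}) \<in> borel_measurable S"
    by (rule term_meas[OF ij A])
  show ?thesis by measurable
qed

lemma R_meas:
  assumes ij: "i < M" "j < M" and A[measurable]: "A \<in> sets S"
  shows "(\<lambda>c. ennreal (dn \<rho> M c * (\<Sum>v\<in>UNIV. \<Sum>w\<in>UNIV. q_of p M ((tp c)(i := v, j := w)) * r v w v' w'))
        * indicator {c. fst (c i) = v' \<and> fst (c j) = w'} c * indicator A c) \<in> borel_measurable S"
proof -
  have [measurable]: "(\<lambda>c. fst (c i)) \<in> measurable S (count_space UNIV)" "(\<lambda>c. fst (c j)) \<in> measurable S (count_space UNIV)"
    using measurable_compose[OF comp_meas measurable_fst] ij by auto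
  have [measurable]: "(\<lambda>c. (\<Sum>v\<in>UNIV. \<Sum>w\<in>UNIV. q_of p M ((tp c)(i := v, j := w)) * r v w v' w')) \<in> borel_measurable S"
    by (rule tpg_meas[of "\<lambda>t. \<Sum>v\<in>UNIV. \<Sum>w\<in>UNIV. q_of p M (t(i := v, j := w)) * r v w v' w'"])
  have [measurable]: "{c \<in> space S. fst (c i) = v' \<and> fst (c j) = w'} \<in> sets S" by measurable
  have "(\<lambda>c. indicator {c. fst (c i) = v' \<and> fst (c j) = w'} c :: ennreal) \<in> borel_measurable S"
    using borel_measurable_indicator'[where A="\<lambda>_. {c. fst (c i) = v' \<and> fst (c j) = w'}" and f="\<lambda>c. c" and M=S] by simp
  then show ?thesis by measurable
qed

lemma nn_integral_sum4:
  fixes f :: "nat \<Rightarrow> nat \<Rightarrow> 'a \<Rightarrow> 'a \<Rightarrow> 'b \<Rightarrow> ennreal"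
  assumes m: "\<And>i j a b. i \<in> I \<Longrightarrow> j \<in> J i \<Longrightarrow> (\<lambda>c. f i j a b c) \<in> borel_measurable N"
  shows "(\<integral>\<^sup>+ c. (\<Sum>i\<in>I. \<Sum>j\<in>J i. \<Sum>a\<in>AA. \<Sum>b\<in>BB. f i j a b c) \<partial>N)
       = (\<Sum>i\<in>I. \<Sum>j\<in>J i. \<Sum>a\<in>AA. \<Sum>b\<in>BB. \<integral>\<^sup>+ c. f i j a b c \<partial>N)"
proof -
  have m3: "(\<lambda>c. \<Sum>b\<in>BB. f i j a b c) \<in> borel_measurable N" if "i \<in> I" "j \<in> J i" for i j a
    by (rule borel_measurable_sum) (rule m[OF that])
  have m2: "(\<lambda>c. \<Sum>a\<in>AA. \<Sum>b\<in>BB. f i j a b c) \<in> borel_measurable N" if "i \<in> I" "j \<in> J i" for i j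
    by (rule borel_measurable_sum) (rule m3[OF that])
  have m1: "(\<lambda>c. \<Sum>j\<in>J i. \<Sum>a\<in>AA. \<Sum>b\<in>BB. f i j a b c) \<in> borel_measurable N" if "i \<in> I" for i
    by (rule borel_measurable_sum) (rule m2[OF that])
  have "(\<integral>\<^sup>+ c. (\<Sum>i\<in>I. \<Sum>j\<in>J i. \<Sum>a\<in>AA. \<Sum>b\<in>BB. f i j a b c) \<partial>N)
      = (\<Sum>i\<in>I. \<integral>\<^sup>+ c. (\<Sum>j\<in>J i. \<Sum>a\<in>AA. \<Sum>b\<in>BB. f i j a b c) \<partial>N)"
    by (rule nn_integral_sum) (rule m1)
  also have "\<dots> = (\<Sum>i\<in>I. \<Sum>j\<in>J i. \<integral>\<^sup>+ c. (\<Sum>a\<in>AA. \<Sum>b\<in>BB. f i j a b c) \<partial>N)"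
    by (intro sum.cong refl nn_integral_sum m2)
  also have "\<dots> = (\<Sum>i\<in>I. \<Sum>j\<in>J i. \<Sum>a\<in>AA. \<integral>\<^sup>+ c. (\<Sum>b\<in>BB. f i j a b c) \<partial>N)"
    by (intro sum.cong refl nn_integral_sum m3)
  also have "\<dots> = (\<Sum>i\<in>I. \<Sum>j\<in>J i. \<Sum>a\<in>AA. \<Sum>b\<in>BB. \<integral>\<^sup>+ c. f i j a b c \<partial>N)"
    by (intro sum.cong refl nn_integral_sum m)
  finally show ?thesis .
qed

end


context setting begin

lemma J_meas:
  assumes ij: "i < M" "j < M" and A: "A \<in> sets S"
  shows "(\<lambda>c. ennreal (r (fst (c i)) (fst (c j)) v' w') * emeasure (canon_kernel \<rho> v' w' (snd (c i) + snd (c j)))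
        {xy \<in> space (lborel \<Otimes>\<^sub>M lborel). c(i := (v', fst xy), j := (w', snd xy)) \<in> A}) \<in> borel_measurable S"
proof -
  have [measurable]: "(\<lambda>c. r (fst (c i)) (fst (c j)) v' w') \<in> borel_measurable S"
    using tpg_meas[of "\<lambda>t. r (t i) (t j) v' w'"] by (simp add: tp_def)
  have [measurable]: "(\<lambda>c. emeasure (canon_kernel \<rho> v' w' (snd (c i) + snd (c j)))
      {xy \<in> space (lborel \<Otimes>\<^sub>M lborel). c(i := (v', fst xy), j := (w', snd xy)) \<in> A}) \<in> borel_measurable S"
    by (rule term_meas[OF ij A])
  show ?thesis by measurable
qed

lemma pointwise:
  fixes c :: "'v state" and A :: "'v state set"
  shows "(\<Sum>i<M. \<Sum>j\<in>{..<M} - {i}. \<Sum>v'\<in>UNIV. \<Sum>w'\<in>UNIV.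
      ennreal (dn \<rho> M c * (\<Sum>v\<in>UNIV. \<Sum>w\<in>UNIV. q_of p M ((tp c)(i := v, j := w)) * r v w v' w'))
        * indicator {c. fst (c i) = v' \<and> fst (c j) = w'} c * indicator A c)
    = ennreal (dn \<rho> M c * In_r r p M (tp c)) * indicator A c"
proof -
  define Y where "Y i j v' w' = (\<Sum>v\<in>UNIV. \<Sum>w\<in>UNIV. q_of p M ((tp c)(i := v, j := w)) * r v w v' w')" for i j v' w'
  have Y0: "0 \<le> Y i j v' w'" for i j v' w' unfolding Y_def by (intro sum_nonneg mult_nonneg_nonneg q_nonneg r_nonneg)
  have inner: "(\<Sum>v'\<in>UNIV. \<Sum>w'\<in>UNIV. ennreal (dn \<rho> M c * (\<Sum>v\<in>UNIV. \<Sum>w\<in>UNIV. q_of p M ((tp c)(i := v, j := w)) * r v w v' w'))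
        * indicator {c. fst (c i) = v' \<and> fst (c j) = w'} c * indicator A c)
      = ennreal (dn \<rho> M c * Y i j (fst (c i)) (fst (c j))) * indicator A c" for i j
  proof -
    have "(\<Sum>v'\<in>UNIV. \<Sum>w'\<in>UNIV. ennreal (dn \<rho> M c * (\<Sum>v\<in>UNIV. \<Sum>w\<in>UNIV. q_of p M ((tp c)(i := v, j := w)) * r v w v' w'))
        * indicator {c. fst (c i) = v' \<and> fst (c j) = w'} c * indicator A c)
      = (\<Sum>v'\<in>UNIV. if v' = fst (c i) then (\<Sum>w'\<in>UNIV. if w' = fst (c j) then ennreal (dn \<rho> M c * Y i j v' w') * indicator A c else 0) else 0)"
      unfolding Y_def by (intro sum.cong refl) (auto split: split_indicator)
    also have "\<dots> = ennreal (dn \<rho> M c * Y i j (fst (c i)) (fst (c j))) * indicator A c"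
      by simp
    finally show ?thesis .
  qed
  have "(\<Sum>i<M. \<Sum>j\<in>{..<M} - {i}. \<Sum>v'\<in>UNIV. \<Sum>w'\<in>UNIV.
      ennreal (dn \<rho> M c * (\<Sum>v\<in>UNIV. \<Sum>w\<in>UNIV. q_of p M ((tp c)(i := v, j := w)) * r v w v' w'))
        * indicator {c. fst (c i) = v' \<and> fst (c j) = w'} c * indicator A c)
     = (\<Sum>i<M. \<Sum>j\<in>{..<M} - {i}. ennreal (dn \<rho> M c * Y i j (fst (c i)) (fst (c j))) * indicator A c)"
    by (intro sum.cong refl) (rule inner)
  also have "\<dots> = (\<Sum>i<M. \<Sum>j\<in>{..<M} - {i}. ennreal (dn \<rho> M c * Y i j (fst (c i)) (fst (c j)))) * indicator A c"
    by (simp only: sum_distrib_right)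
  also have "(\<Sum>i<M. \<Sum>j\<in>{..<M} - {i}. ennreal (dn \<rho> M c * Y i j (fst (c i)) (fst (c j))))
      = (\<Sum>i<M. ennreal (\<Sum>j\<in>{..<M} - {i}. dn \<rho> M c * Y i j (fst (c i)) (fst (c j))))"
    by (intro sum.cong refl sum_ennreal mult_nonneg_nonneg dn_nonneg Y0)
  also have "\<dots> = ennreal (\<Sum>i<M. \<Sum>j\<in>{..<M} - {i}. dn \<rho> M c * Y i j (fst (c i)) (fst (c j)))"
    by (intro sum_ennreal sum_nonneg mult_nonneg_nonneg dn_nonneg Y0)
  also have "(\<Sum>i<M. \<Sum>j\<in>{..<M} - {i}. dn \<rho> M c * Y i j (fst (c i)) (fst (c j))) = dn \<rho> M c * In_r r p M (tp c)"
    unfolding In_r_def Y_def tp_def by (simp only: sum_distrib_left)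
  finally show ?thesis .
qed

lemma main: "invariant r \<rho> M (inv_measure M \<rho> p)"
  unfolding invariant_def
proof (intro conjI ballI)
  show "sets (inv_measure M \<rho> p) = sets S" unfolding inv_density by simp
next
  fix A assume A[measurable]: "A \<in> sets S"
  define F where "F c = ennreal (q_of p M (tp c) * dn \<rho> M c)" for c
  have Fm: "F \<in> borel_measurable S"
  proof -
    have "(\<lambda>c. q_of p M (tp c) * dn \<rho> M c) \<in> borel_measurable S"
      by (rule borel_measurable_times[OF tpg_meas dn_meas])
    then show ?thesis unfolding F_def by (rule measurable_compose[OF _ measurable_ennreal])
  qed
  define Jt where "Jt i j v' w' c = ennreal (r (fst (c i)) (fst (c j)) v' w') * emeasure (canon_kernel \<rho> v' w' (snd (c i) + snd (c j)))
        {xy \<in> space (lborel \<Otimes>\<^sub>M lborel). c(i := (v', fst xy), j := (w', snd xy)) \<in> A}" for i j v' w' c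
  define Rt where "Rt i j v' w' c = ennreal (dn \<rho> M c * (\<Sum>v\<in>UNIV. \<Sum>w\<in>UNIV. q_of p M ((tp c)(i := v, j := w)) * r v w v' w'))
        * indicator {c. fst (c i) = v' \<and> fst (c j) = w'} c * indicator A c" for i j v' w' c
  have Jtm: "(\<lambda>c. Jt i j v' w' c) \<in> borel_measurable S" if "i \<in> {..<M}" "j \<in> {..<M} - {i}" for i j v' w'
    unfolding Jt_def by (rule J_meas) (use that A in auto)
  have Ltm: "(\<lambda>c. F c * Jt i j v' w' c) \<in> borel_measurable S" if "i \<in> {..<M}" "j \<in> {..<M} - {i}" for i j v' w'
    by (rule borel_measurable_times_ennreal[OF Fm Jtm[OF that]])
  have Rtm: "(\<lambda>c. Rt i j v' w' c) \<in> borel_measurable S" if "i \<in> {..<M}" "j \<in> {..<M} - {i}" for i j v' w'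
    unfolding Rt_def by (rule R_meas) (use that A in auto)
  have Jeq: "jump_rate r \<rho> M c A = (\<Sum>i<M. \<Sum>j\<in>{..<M} - {i}. \<Sum>v'\<in>UNIV. \<Sum>w'\<in>UNIV. Jt i j v' w' c)" for c
    unfolding jump_rate_def Jt_def ..
  have Jm: "(\<lambda>c. jump_rate r \<rho> M c A) \<in> borel_measurable S"
  proof -
    have "(\<lambda>c. \<Sum>i<M. \<Sum>j\<in>{..<M} - {i}. \<Sum>v'\<in>UNIV. \<Sum>w'\<in>UNIV. Jt i j v' w' c) \<in> borel_measurable S"
    proof (rule borel_measurable_sum)
      fix i assume i: "i \<in> {..<M}"
      show "(\<lambda>c. \<Sum>j\<in>{..<M} - {i}. \<Sum>v'\<in>UNIV. \<Sum>w'\<in>UNIV. Jt i j v' w' c) \<in> borel_measurable S"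
      proof (rule borel_measurable_sum)
        fix j assume j: "j \<in> {..<M} - {i}"
        show "(\<lambda>c. \<Sum>v'\<in>UNIV. \<Sum>w'\<in>UNIV. Jt i j v' w' c) \<in> borel_measurable S"
          by (intro borel_measurable_sum Jtm[OF i j])
      qed
    qed
    then show ?thesis unfolding Jeq .
  qed
  have Om: "(\<lambda>c. ennreal (out_rate r M c) * indicator A c) \<in> borel_measurable S"
  proof -
    have oe: "(\<lambda>c. out_rate r M c) = (\<lambda>c. Out_r r M (tp c))" by (simp add: fun_eq_iff out_rate_def Out_r_def tp_def)
    have "(\<lambda>c. out_rate r M c) \<in> borel_measurable S" unfolding oe by (rule tpg_meas)
    then show ?thesis
      by (intro borel_measurable_times_ennreal borel_measurable_indicator A measurable_compose[OF _ measurable_ennreal])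
  qed
  have "(\<integral>\<^sup>+ c. jump_rate r \<rho> M c A \<partial>inv_measure M \<rho> p) = (\<integral>\<^sup>+ c. F c * jump_rate r \<rho> M c A \<partial>S)"
    unfolding inv_density F_def[symmetric] by (rule nn_integral_density[OF Fm Jm])
  also have "\<dots> = (\<integral>\<^sup>+ c. (\<Sum>i<M. \<Sum>j\<in>{..<M} - {i}. \<Sum>v'\<in>UNIV. \<Sum>w'\<in>UNIV. F c * Jt i j v' w' c) \<partial>S)"
    by (intro nn_integral_cong) (simp only: Jeq sum_distrib_left)
  also have "\<dots> = (\<Sum>i<M. \<Sum>j\<in>{..<M} - {i}. \<Sum>v'\<in>UNIV. \<Sum>w'\<in>UNIV. \<integral>\<^sup>+ c. F c * Jt i j v' w' c \<partial>S)"
    by (rule nn_integral_sum4) (rule Ltm)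
  also have "\<dots> = (\<Sum>i<M. \<Sum>j\<in>{..<M} - {i}. \<Sum>v'\<in>UNIV. \<Sum>w'\<in>UNIV. \<integral>\<^sup>+ c. Rt i j v' w' c \<partial>S)"
  proof (intro sum.cong refl)
    fix i j v' w' assume "i \<in> {..<M}" "j \<in> {..<M} - {i}"
    then have ij: "i < M" "j < M" "i \<noteq> j" by auto
    show "(\<integral>\<^sup>+ c. F c * Jt i j v' w' c \<partial>S) = (\<integral>\<^sup>+ c. Rt i j v' w' c \<partial>S)"
      unfolding F_def Jt_def Rt_def by (rule T1[OF ij A])
  qed
  also have "\<dots> = (\<integral>\<^sup>+ c. (\<Sum>i<M. \<Sum>j\<in>{..<M} - {i}. \<Sum>v'\<in>UNIV. \<Sum>w'\<in>UNIV. Rt i j v' w' c) \<partial>S)"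
    by (rule nn_integral_sum4[symmetric]) (rule Rtm)
  also have "\<dots> = (\<integral>\<^sup>+ c. ennreal (dn \<rho> M c * In_r r p M (tp c)) * indicator A c \<partial>S)"
    unfolding Rt_def pointwise ..
  also have "\<dots> = (\<integral>\<^sup>+ c. F c * (ennreal (out_rate r M c) * indicator A c) \<partial>S)"
  proof (rule nn_integral_cong)
    fix c :: "'v state"
    have "out_rate r M c = Out_r r M (tp c)" by (simp add: out_rate_def Out_r_def tp_def)
    moreover have "0 \<le> Out_r r M (tp c)" unfolding Out_r_def by (intro sum_nonneg r_nonneg)
    moreover have e: "ennreal (q_of p M (tp c) * dn \<rho> M c) * ennreal (Out_r r M (tp c)) = ennreal (q_of p M (tp c) * dn \<rho> M c * Out_r r M (tp c))"
      by (rule ennreal_mult[symmetric]) (simp_all add: q_nonneg dn_nonneg \<open>0 \<le> Out_r r M (tp c)\<close>)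
    moreover have "dn \<rho> M c * (q_of p M (tp c) * Out_r r M (tp c)) = q_of p M (tp c) * dn \<rho> M c * Out_r r M (tp c)"
      by (simp only: mult_ac)
    ultimately show "ennreal (dn \<rho> M c * In_r r p M (tp c)) * indicator A c = F c * (ennreal (out_rate r M c) * indicator A c)"
      unfolding F_def balance[OF stat] by (simp only:) (subst e[symmetric], rule mult.assoc)
  qed
  also have "\<dots> = (\<integral>\<^sup>+ c. ennreal (out_rate r M c) * indicator A c \<partial>inv_measure M \<rho> p)"
    unfolding inv_density F_def[symmetric] by (rule nn_integral_density[OF Fm Om, symmetric])
  finally show "(\<integral>\<^sup>+ c. jump_rate r \<rho> M c A \<partial>inv_measure M \<rho> p) = (\<integral>\<^sup>+ c. ennreal (out_rate r M c) * indicator A c \<partial>inv_measure M \<rho> p)" .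
qed

end

theorem theorem7:
  fixes r :: "'v::finite \<Rightarrow> 'v \<Rightarrow> 'v \<Rightarrow> 'v \<Rightarrow> real"
    and \<rho> :: "'v \<Rightarrow> real \<Rightarrow> real"
    and p :: "('v \<Rightarrow> nat) \<Rightarrow> real"
    and M :: nat
  assumes r_nonneg: "\<And>v w v' w'. 0 \<le> r v w v' w'"
    and dens_meas: "\<And>v. \<rho> v \<in> borel_measurable lborel"
    and dens_nonneg: "\<And>v x. 0 \<le> \<rho> v x"
    and dens_supp: "\<And>v x. x < 0 \<Longrightarrow> \<rho> v x = 0"
    and dens_prob: "\<And>v. (\<integral>\<^sup>+ x. ennreal (\<rho> v x) \<partial>lborel) = 1"
    and conv_eq: "\<And>v w v' w' T. 0 < r v w v' w' \<Longrightarrow> 0 \<le> T \<Longrightarrow> conv \<rho> v w T = conv \<rho> v' w' T"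
    and stat: "stationary_counts r M p"
  shows "invariant r \<rho> M (inv_measure M \<rho> p)"
proof -
  interpret setting \<rho> r p M
    by unfold_locales (use assms in auto)
  show ?thesis by (rule main)
qed

end
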